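(* Suppose Assumptions A and C hold, and suppose that for every semidefinite face $\mathcal F$ of $\Gamma$, $$\dim(\mathcal V(\mathcal F))\ \ge\ \operatorname{affdim}(\{b(\gamma):\gamma\in\mathcal F\})+1.$$ Let $(\hat x,\hat t)\in\mathcal D_{\mathrm{SDP}}$ and suppose $\mathcal F(\hat x)$ is a semidefinite face of $\Gamma$. Then $(\hat x,\hat t)$ is a convex combination of finitely many points $(x_\alpha,t_\alpha)\in\mathcal D_{\mathrm{SDP}}$ with $\operatorname{affdim}(\mathcal F(x_\alpha))>\operatorname{affdim}(\mathcal F(\hat x))$ for each $\alpha$.
   Context: Fix integers $N\ge 1$, $m_I,m_E\ge 0$, $m:=m_I+m_E\ge 1$; $[a,b]=\{a,\dots,b\}$, $[n]=[1,n]$. For $i\in[0,m]$ let $q_i(x)=x^\top A_ix+2b_i^\top x+c_i$ with $A_i\in\mathbb S^N$, $b_i\in\mathbb R^N$, $c_i\in\mathbb R$. Let $Q_i=\begin{pmatrix}c_i& b_i^\top\\ b_i& A_i\end{pmatrix}$ and $\mathcal D_{\mathrm{SDP}}:=\{(x,t)\in\mathbb R^{N+1}:\exists X\in\mathbb S^N$ with $Y=\begin{pmatrix}1&x^\top\\ x& X\end{pmatrix}\succeq0$, $\langle Q_0,Y\rangle\le 2t$, $\langle Q_i,Y\rangle\le 0\ \forall i\in[m_I]$, $\langle Q_i,Y\rangle= 0\ \forall i\in[m_I+1,m]\}$. For $\gamma\in\mathbb R^m$: $A(\gamma)=A_0+\sum\gamma_iA_i$, $b(\gamma)=b_0+\sum\gamma_ib_i$,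 $q(\gamma,x)=q_0(x)+\sum\gamma_iq_i(x)$; $\Gamma:=\{\gamma: A(\gamma)\succeq0,\ \gamma_i\ge0\ \forall i\in[m_I]\}$. Assumption A: the QCQP feasible set $\{x:q_i(x)\le0\ \forall i\in[m_I],\ q_i(x)=0\ \forall i\in[m_I+1,m]\}$ is nonempty and some $\gamma^*$ with $\gamma^*_i\ge0$ ($i\in[m_I]$) has $A(\gamma^* )\succ0$. Assumption C: $\Gamma$ is a polyhedron. Under C, whenever $\sup_{\gamma\in\Gamma}q(\gamma,\hat x)$ is finite (e.g. for $(\hat x,\hat t)\in\mathcal D_{\mathrm{SDP}}$) it is attained and $\mathcal F(\hat x):=\arg\max_{\gamma\in\Gamma}q(\gamma,\hat x)$ is a nonempty face of $\Gamma$. A nonempty face $\mathcal F$ is definite if some $\gamma\in\mathcal F$ has $A(\gamma)\succ0$, semidefinite otherwise; $\mathcal V(\mathcal F):=\{v: A(\gamma)v=0\ \forall \gamma\in\mathcal F\}$. $\operatorname{affdim}$ is the dimension of the affine hull. *)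

theory Defs
  imports "HOL-Analysis.Analysis"
begin

text \<open>QCQP data: the objective index 0 is given separately (A0, b0, c0); the constraint
  indices [m] are the elements of a finite type 'm (so m = CARD('m) \<ge> 1); the
  inequality constraints are those indices in the set MI, the equality constraints
  are the remaining ones.  The dimension N = CARD('n).\<close>

definition psd :: "real^'k^'k \<Rightarrow> bool" where
  "psd M \<longleftrightarrow> (\<forall>v. 0 \<le> v \<bullet> (M *v v))"

definition pd :: "real^'k^'k \<Rightarrow> bool" where
  "pd M \<longleftrightarrow> (\<forall>v. v \<noteq> 0 \<longrightarrow> 0 < v \<bullet> (M *v v))"

definition symm :: "real^'k^'k \<Rightarrow> bool" where
  "symm M \<longleftrightarrow> transpose M = M"

definition frob :: "real^'k^'k \<Rightarrow> real^'k^'k \<Rightarrow> real" where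
  "frob P R = (\<Sum>i\<in>UNIV. \<Sum>j\<in>UNIV. P$i$j * R$i$j)"

text \<open>The bordered (N+1)x(N+1) matrix [[s, w^T],[w, M]], indexed by 'n option (None = index 0).\<close>
definition border :: "real \<Rightarrow> real^'n \<Rightarrow> real^'n^'n \<Rightarrow> real^('n option)^('n option)" where
  "border s w M = (\<chi> i j. case i of
      None \<Rightarrow> (case j of None \<Rightarrow> s | Some j' \<Rightarrow> w$j')
    | Some i' \<Rightarrow> (case j of None \<Rightarrow> w$i' | Some j' \<Rightarrow> M$i'$j'))"

definition qf :: "real^'n^'n \<Rightarrow> real^'n \<Rightarrow> real \<Rightarrow> real^'n \<Rightarrow> real" where
  "qf A b c x = x \<bullet> (A *v x) + 2 * (b \<bullet> x) + c"

definition D_SDP ::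
  "real^'n^'n \<Rightarrow> real^'n \<Rightarrow> real \<Rightarrow> ('m \<Rightarrow> real^'n^'n) \<Rightarrow> ('m \<Rightarrow> real^'n) \<Rightarrow> ('m \<Rightarrow> real)
   \<Rightarrow> 'm set \<Rightarrow> ((real^'n) \<times> real) set" where
  "D_SDP A0 b0 c0 A b c MI = {(x, t). \<exists>X. symm X \<and>
      (let Y = border 1 x X in psd Y \<and>
        frob (border c0 b0 A0) Y \<le> 2 * t \<and>
        (\<forall>i\<in>MI. frob (border (c i) (b i) (A i)) Y \<le> 0) \<and>
        (\<forall>i\<in>- MI. frob (border (c i) (b i) (A i)) Y = 0))}"

definition Agam :: "real^'n^'n \<Rightarrow> ('m::finite \<Rightarrow> real^'n^'n) \<Rightarrow> real^'m \<Rightarrow> real^'n^'n" where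
  "Agam A0 A \<gamma> = A0 + (\<Sum>i\<in>UNIV. \<gamma>$i *\<^sub>R A i)"

definition bgam :: "real^'n \<Rightarrow> ('m::finite \<Rightarrow> real^'n) \<Rightarrow> real^'m \<Rightarrow> real^'n" where
  "bgam b0 b \<gamma> = b0 + (\<Sum>i\<in>UNIV. \<gamma>$i *\<^sub>R b i)"

definition qgam ::
  "real^'n^'n \<Rightarrow> real^'n \<Rightarrow> real \<Rightarrow> ('m::finite \<Rightarrow> real^'n^'n) \<Rightarrow> ('m \<Rightarrow> real^'n) \<Rightarrow> ('m \<Rightarrow> real)
   \<Rightarrow> real^'m \<Rightarrow> real^'n \<Rightarrow> real" where
  "qgam A0 b0 c0 A b c \<gamma> x = qf A0 b0 c0 x + (\<Sum>i\<in>UNIV. \<gamma>$i * qf (A i) (b i) (c i) x)"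

definition Gamma :: "real^'n^'n \<Rightarrow> ('m::finite \<Rightarrow> real^'n^'n) \<Rightarrow> 'm set \<Rightarrow> (real^'m) set" where
  "Gamma A0 A MI = {\<gamma>. psd (Agam A0 A \<gamma>) \<and> (\<forall>i\<in>MI. 0 \<le> \<gamma>$i)}"

definition Fx ::
  "real^'n^'n \<Rightarrow> real^'n \<Rightarrow> real \<Rightarrow> ('m::finite \<Rightarrow> real^'n^'n) \<Rightarrow> ('m \<Rightarrow> real^'n) \<Rightarrow> ('m \<Rightarrow> real)
   \<Rightarrow> 'm set \<Rightarrow> real^'n \<Rightarrow> (real^'m) set" where
  "Fx A0 b0 c0 A b c MI x = {\<gamma> \<in> Gamma A0 A MI.
      \<forall>\<gamma>'\<in>Gamma A0 A MI. qgam A0 b0 c0 A b c \<gamma>' x \<le> qgam A0 b0 c0 A b c \<gamma> x}"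

definition semidef_face :: "real^'n^'n \<Rightarrow> ('m::finite \<Rightarrow> real^'n^'n) \<Rightarrow> 'm set \<Rightarrow> (real^'m) set \<Rightarrow> bool" where
  "semidef_face A0 A MI F \<longleftrightarrow> F face_of Gamma A0 A MI \<and> F \<noteq> {} \<and> \<not> (\<exists>\<gamma>\<in>F. pd (Agam A0 A \<gamma>))"

definition Vker :: "real^'n^'n \<Rightarrow> ('m::finite \<Rightarrow> real^'n^'n) \<Rightarrow> (real^'m) set \<Rightarrow> (real^'n) set" where
  "Vker A0 A F = {v. \<forall>\<gamma>\<in>F. Agam A0 A \<gamma> *v v = 0}"

end

theory Submission
  imports Defs
begin

definition outer :: "real^'n \<Rightarrow> real^'n \<Rightarrow> real^'n^'n" where
  "outer u w = (\<chi> i j. u$i * w$j)"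

lemma inner_mv: "a \<bullet> (M *v w) = (\<Sum>i\<in>UNIV. \<Sum>j\<in>UNIV. a$i * M$i$j * w$j)"
  by (simp add: inner_vec_def matrix_vector_mult_def sum_distrib_left mult.assoc)

lemma symmD: "symm P \<Longrightarrow> P$i$j = P$j$i"
proof -
  assume "symm P"
  hence "transpose P = P" by (simp add: symm_def)
  hence "P$i$j = (transpose P)$i$j" by simp
  thus ?thesis by (simp add: transpose_def)
qed

lemma symm_inner: assumes "symm P" shows "(P *v a) \<bullet> w = a \<bullet> (P *v w)"
proof -
  have "(P *v a) \<bullet> w = (\<Sum>i\<in>UNIV. \<Sum>j\<in>UNIV. w$i * P$i$j * a$j)"
    by (simp add: inner_mv[symmetric] inner_commute)
  also have "\<dots> = (\<Sum>j\<in>UNIV. \<Sum>i\<in>UNIV. w$i * P$i$j * a$j)" by (rule sum.swap)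
  also have "\<dots> = (\<Sum>j\<in>UNIV. \<Sum>i\<in>UNIV. a$j * P$j$i * w$i)"
    using symmD[OF assms] by (simp add: mult.commute mult.left_commute)
  finally show ?thesis by (simp add: inner_mv)
qed

lemma frob_outer: "frob (outer u u) Z = u \<bullet> (Z *v u)"
  by (simp add: frob_def outer_def inner_mv mult.commute mult.left_commute)

lemma frob_diff: "frob (P - Q) Z = frob P Z - frob Q Z"
  by (simp add: frob_def algebra_simps sum_subtractf)

lemma frob_scale: "frob (r *\<^sub>R P) Z = r * frob P Z"
  by (simp add: frob_def sum_distrib_left mult.assoc)

lemma outer_mv: "outer u u *v w = (u \<bullet> w) *\<^sub>R u"
  by (simp add: outer_def matrix_vector_mult_def vec_eq_iff inner_vec_def sum_distrib_left mult.commute mult.left_commute)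

lemma scaleR_mv: "(r *\<^sub>R M) *v w = r *\<^sub>R (M *v (w::real^'n))"
  by (simp add: matrix_vector_mult_def vec_eq_iff sum_distrib_left mult.assoc)

lemma subspace_ker: fixes P :: "real^'n^'m" shows "subspace {w. P *v w = 0}"
  using linear_cmul[OF matrix_vector_mul_linear, of P]
  by (simp add: subspace_def matrix_vector_right_distrib)

lemma polar_zero:
  assumes s: "symm P" and z: "\<And>w. w \<bullet> (P *v w) = 0"
  shows "P *v w = 0"
proof -
  have "(w + P *v w) \<bullet> (P *v (w + P *v w)) = 0" by (rule z)
  hence "w \<bullet> (P *v w) + w \<bullet> (P *v (P *v w)) + (P *v w) \<bullet> (P *v w) + (P *v w) \<bullet> (P *v (P *v w)) = 0"
    by (simp add: matrix_vector_right_distrib inner_add_left inner_add_right)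
  moreover have "w \<bullet> (P *v (P *v w)) = (P *v w) \<bullet> (P *v w)"
    using symm_inner[OF s, of w "P *v w"] by simp
  ultimately have "2 * ((P *v w) \<bullet> (P *v w)) = 0" using z[of w] z[of "P *v w"] by simp
  thus ?thesis by simp
qed

lemma quad_zero_ineq:
  fixes a c :: real
  assumes "\<And>e. e > 0 \<Longrightarrow> 2 * e * a + e^2 * c \<le> 0" "a \<ge> 0"
  shows "a = 0"
proof (rule ccontr)
  assume "a \<noteq> 0" hence ap: "a > 0" using assms(2) by simp
  define e where "e = a / (\<bar>c\<bar> + 1)"
  have ep: "e > 0" using ap by (simp add: e_def)
  have "2 * e * a + e^2 * c = e * (2*a + e*c)" by (simp add: power2_eq_square algebra_simps)
  moreover have "e * \<bar>c\<bar> < a" using ap by (simp add: e_def field_simps)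
  hence "2*a + e*c > 0" using ep by (smt (verit) abs_mult_pos abs_of_pos mult_minus_right abs_ge_minus_self)
  ultimately show False using assms(1)[OF ep] ep by (smt (verit) mult_pos_pos)
qed

lemma frob_psd_nonneg:
  fixes P Z :: "real^'n^'n"
  assumes "symm P" "psd P" "psd Z"
  shows "0 \<le> frob P Z"
  using assms(1,2)
proof (induction "CARD('n) - dim {w. P *v w = 0}" arbitrary: P rule: less_induct)
  case less
  note sP = less.prems(1) and pP = less.prems(2)
  show ?case
  proof (cases "\<forall>w. P *v w = 0")
    case True
    have "P$i$j = 0" for i j
    proof -
      have "(P *v axis j 1)$i = P$i$j" by (simp add: matrix_vector_mult_def axis_def if_distrib cong: if_cong)
      thus ?thesis using True by simp
    qed
    thus ?thesis by (simp add: frob_def)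
  next
    case False
    then obtain w0 where w0: "P *v w0 \<noteq> 0" by blast
    have cont: "continuous_on (sphere 0 1) (\<lambda>u::real^'n. u \<bullet> (P *v u))"
      by (intro continuous_intros matrix_vector_mult_linear_continuous_on)
    have ne: "sphere (0::real^'n) 1 \<noteq> {}" by simp
    obtain v where v: "v \<in> sphere 0 1" and vmax: "\<And>u. u \<in> sphere 0 1 \<Longrightarrow> u \<bullet> (P *v u) \<le> v \<bullet> (P *v v)"
      using continuous_attains_sup[OF compact_sphere ne cont] by blast
    define l where "l = v \<bullet> (P *v v)"
    have nv: "norm v = 1" using v by simp
    have vv: "v \<bullet> v = 1" using nv by (simp add: dot_square_norm)
    have gen: "w \<bullet> (P *v w) \<le> l * (w \<bullet> w)" for w
    proof (cases "w = 0")
      case True thus ?thesis by simp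
    next
      case False
      define u where "u = (1 / norm w) *\<^sub>R w"
      have "u \<in> sphere 0 1" using False by (simp add: u_def)
      hence "u \<bullet> (P *v u) \<le> l" using vmax l_def by blast
      moreover have "u \<bullet> (P *v u) = (w \<bullet> (P *v w)) / (norm w)^2"
        by (simp add: u_def matrix_vector_mult_scaleR power2_eq_square)
      ultimately have "w \<bullet> (P *v w) \<le> l * (norm w)^2" using False
        by (simp add: divide_le_eq)
      thus ?thesis by (simp add: dot_square_norm)
    qed
    have lpos: "l > 0"
    proof (rule ccontr)
      assume "\<not> l > 0"
      hence "w \<bullet> (P *v w) = 0" for w
        using gen[of w] pP[unfolded psd_def, rule_format, of w]
        by (smt (verit) inner_ge_zero mult_nonpos_nonneg)
      hence "P *v w0 = 0" using polar_zero[OF sP] by blast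
      thus False using w0 by simp
    qed
    define r where "r = P *v v - l *\<^sub>R v"
    have vr: "v \<bullet> r = 0" by (simp add: r_def l_def inner_diff_right vv)
    have rPv: "r \<bullet> (P *v v) = r \<bullet> r"
    proof -
      have "r \<bullet> r = r \<bullet> (P *v v) - l * (r \<bullet> v)" by (simp add: r_def inner_diff_right)
      thus ?thesis using vr by (simp add: inner_commute)
    qed
    have "r \<bullet> r = 0"
    proof (rule quad_zero_ineq)
      fix e :: real assume "e > 0"
      have e1: "(v + e *\<^sub>R r) \<bullet> (P *v (v + e *\<^sub>R r)) \<le> l * ((v + e *\<^sub>R r) \<bullet> (v + e *\<^sub>R r))"
        by (rule gen)
      have e2: "(v + e *\<^sub>R r) \<bullet> (P *v (v + e *\<^sub>R r)) =
          l + 2 * e * (r \<bullet> r) + e^2 * (r \<bullet> (P *v r))"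
      proof -
        have "v \<bullet> (P *v r) = r \<bullet> r" using symm_inner[OF sP, of v r] rPv by (simp add: inner_commute)
        thus ?thesis using rPv
          by (simp add: matrix_vector_right_distrib matrix_vector_mult_scaleR inner_add_left inner_add_right
              l_def power2_eq_square algebra_simps)
      qed
      have e3: "(v + e *\<^sub>R r) \<bullet> (v + e *\<^sub>R r) = 1 + e^2 * (r \<bullet> r)"
        using vr vv by (simp add: inner_add_left inner_add_right inner_commute power2_eq_square)
      have "l + 2 * e * (r \<bullet> r) + e^2 * (r \<bullet> (P *v r)) \<le> l * (1 + e^2 * (r \<bullet> r))"
        using e1 unfolding e2 e3 .
      thus "2 * e * (r \<bullet> r) + e^2 * (r \<bullet> (P *v r) - l * (r \<bullet> r)) \<le> 0"
        by (simp add: algebra_simps)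
    qed simp
    hence eig: "P *v v = l *\<^sub>R v" by (simp add: r_def)
    define P' where "P' = P - l *\<^sub>R outer v v"
    have P'mv: "P' *v w = P *v w - (l * (v \<bullet> w)) *\<^sub>R v" for w
      by (simp add: P'_def matrix_vector_mult_diff_rdistrib outer_mv scaleR_mv)
    have sP': "symm P'"
      using sP unfolding symm_def P'_def outer_def
      by (simp add: transpose_def vec_eq_iff mult.commute)
    have pP': "psd P'"
      unfolding psd_def
    proof
      fix w
      define a where "a = v \<bullet> w"
      define u where "u = w - a *\<^sub>R v"
      have uv: "u \<bullet> v = 0"
      proof -
        have "v \<bullet> u = v \<bullet> w - (v \<bullet> w) * (v \<bullet> v)" by (simp add: u_def a_def inner_diff_right)
        thus ?thesis using vv by (simp add: inner_commute)
      qed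
      have Puv: "v \<bullet> (P *v u) = 0"
        using symm_inner[OF sP, of v u] eig uv by (simp add: inner_commute)
      have Pvu: "u \<bullet> (P *v v) = 0" using eig uv by simp
      have w: "w = u + a *\<^sub>R v" by (simp add: u_def)
      have "w \<bullet> (P' *v w) = w \<bullet> (P *v w) - l * a * a" by (simp add: P'mv a_def inner_diff_right inner_commute[of w v])
      also have "w \<bullet> (P *v w) = u \<bullet> (P *v u) + a * a * l"
        unfolding w using Puv Pvu
        by (simp add: matrix_vector_right_distrib matrix_vector_mult_scaleR inner_add_left inner_add_right l_def)
      finally have "w \<bullet> (P' *v w) = u \<bullet> (P *v u)" by simp
      thus "0 \<le> w \<bullet> (P' *v w)" using pP psd_def by auto
    qed
    have sub: "{w. P *v w = 0} \<subset> {w. P' *v w = 0}"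
    proof
      show "{w. P *v w = 0} \<subseteq> {w. P' *v w = 0}"
      proof
        fix w assume "w \<in> {w. P *v w = 0}"
        hence Pw: "P *v w = 0" by simp
        have "l * (v \<bullet> w) = (P *v v) \<bullet> w" using eig by simp
        also have "\<dots> = v \<bullet> (P *v w)" by (rule symm_inner[OF sP])
        finally have "v \<bullet> w = 0" using Pw lpos by simp
        thus "w \<in> {w. P' *v w = 0}" using Pw by (simp add: P'mv)
      qed
      have "v \<in> {w. P' *v w = 0}" by (simp add: P'mv eig vv)
      moreover have "v \<notin> {w. P *v w = 0}" using eig lpos nv by auto
      ultimately show "{w. P *v w = 0} \<noteq> {w. P' *v w = 0}" by blast
    qed
    have "dim {w. P *v w = 0} < dim {w. P' *v w = 0}"
      by (rule dim_psubset) (simp add: span_eq_iff[THEN iffD2, OF subspace_ker] sub)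
    moreover have "dim {w. P' *v w = 0} \<le> CARD('n)" by (rule dim_subset_UNIV_cart)
    ultimately have lt: "CARD('n) - dim {w. P' *v w = 0} < CARD('n) - dim {w. P *v w = 0}" by linarith
    have IH: "0 \<le> frob P' Z" by (rule less.hyps[OF lt sP' pP'])
    have "frob P Z = frob P' Z + l * frob (outer v v) Z"
      by (simp add: P'_def frob_diff frob_scale)
    moreover have "0 \<le> frob (outer v v) Z" using assms(3) by (simp add: frob_outer psd_def)
    ultimately show ?thesis using IH lpos by simp
  qed
qed

lemma sum_option: "(\<Sum>i\<in>(UNIV::'a::finite option set). f i) = f None + (\<Sum>i\<in>UNIV. f (Some i))"
proof -
  have "sum f (UNIV::'a option set) = sum f (insert None (range Some))" using UNIV_option_conv by metis
  also have "\<dots> = f None + sum f (range Some)" by (subst sum.insert) auto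
  also have "sum f (range Some) = (\<Sum>i\<in>UNIV. f (Some i))" by (simp add: sum.reindex)
  finally show ?thesis .
qed

lemma border_comp:
  fixes w :: "real^'n::finite"
  shows "border s w M $ None $ None = s"
  "border s w M $ None $ Some j = w$j"
  "border s w M $ Some i $ None = w$i"
  "border s w M $ Some i $ Some j = M$i$j"
  by (simp_all add: border_def)

lemma frob_border: "frob (border c b A) (border 1 x X) = c + 2 * (b \<bullet> x) + frob A X"
  by (simp add: frob_def sum_option border_comp sum.distrib inner_vec_def)

lemma quad_border:
  fixes w :: "real^('n::finite option)"
  defines "u \<equiv> (\<chi> i. w $ Some i)"
  shows "w \<bullet> (border s a M *v w) = s * (w$None)^2 + 2 * (w$None) * (a \<bullet> u) + u \<bullet> (M *v u)"
proof -
  have c1: "(border s a M *v w) $ None = s * w$None + a \<bullet> u"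
    by (simp add: matrix_vector_mult_def sum_option border_comp u_def inner_vec_def)
  have c2: "(border s a M *v w) $ Some i = a$i * w$None + (M *v u)$i" for i
    by (simp add: matrix_vector_mult_def sum_option border_comp u_def)
  have "w \<bullet> (border s a M *v w) = w$None * (s * w$None + a \<bullet> u) + (\<Sum>i\<in>UNIV. u$i * (a$i * w$None + (M *v u)$i))"
    by (simp add: inner_vec_def sum_option c1 c2 u_def)
  also have "\<dots> = s * (w$None)^2 + w$None * (a \<bullet> u) + (w$None * (\<Sum>i\<in>UNIV. u$i * a$i) + u \<bullet> (M *v u))"
    by (simp add: distrib_left sum.distrib sum_distrib_left inner_vec_def power2_eq_square algebra_simps)
  also have "(\<Sum>i\<in>UNIV. u$i * a$i) = a \<bullet> u" by (simp add: inner_vec_def mult.commute)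
  finally show ?thesis by (simp add: algebra_simps)
qed

lemma frob_add2: "frob P (X + W) = frob P X + frob P W"
  by (simp add: frob_def algebra_simps sum.distrib)

lemma frob_diff2: "frob P (X - W) = frob P X - frob P W"
  by (simp add: frob_def algebra_simps sum_subtractf)

lemma quad_outer: "u \<bullet> (outer x x *v u) = (x \<bullet> u)^2"
  by (simp add: outer_mv power2_eq_square inner_commute)

lemma frob_outer2: "frob A (outer x x) = x \<bullet> (A *v x)"
  by (simp add: frob_def outer_def inner_mv mult.commute mult.left_commute)

lemma psd_border_Z:
  fixes x :: "real^'n::finite"
  assumes "psd (border 1 x X)"
  shows "psd (X - outer x x)"
  unfolding psd_def
proof
  fix u :: "real^'n"
  define w :: "real^('n option)" where "w = (\<chi> i. case i of None \<Rightarrow> - (x \<bullet> u) | Some j \<Rightarrow> u$j)"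
  have "(\<chi> i. w $ Some i) = u" by (simp add: w_def vec_eq_iff)
  hence "w \<bullet> (border 1 x X *v w) = (x \<bullet> u)^2 - 2 * (x \<bullet> u)^2 + u \<bullet> (X *v u)"
    using quad_border[of w 1 x X] by (simp add: w_def power2_eq_square)
  moreover have "0 \<le> w \<bullet> (border 1 x X *v w)" using assms psd_def by blast
  ultimately show "0 \<le> u \<bullet> ((X - outer x x) *v u)"
    by (simp add: matrix_vector_mult_diff_rdistrib inner_diff_right quad_outer)
qed

lemma psd_border_from_Z:
  fixes x :: "real^'n::finite"
  assumes "psd Z"
  shows "psd (border 1 x (outer x x + Z))"
  unfolding psd_def
proof
  fix w :: "real^('n option)"
  define u where "u = (\<chi> i. w $ Some i)"
  have "w \<bullet> (border 1 x (outer x x + Z) *v w) = (w$None)^2 + 2 * w$None * (x \<bullet> u) + ((x \<bullet> u)^2 + u \<bullet> (Z *v u))"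
    using quad_border[of w 1 x "outer x x + Z"] by (simp add: u_def matrix_vector_mult_add_rdistrib inner_add_right quad_outer)
  also have "\<dots> = (w$None + x \<bullet> u)^2 + u \<bullet> (Z *v u)" by (simp add: power2_eq_square algebra_simps)
  finally show "0 \<le> w \<bullet> (border 1 x (outer x x + Z) *v w)" using assms psd_def
    by (metis add_nonneg_nonneg zero_le_power2)
qed

lemma symm_iff: "symm M \<longleftrightarrow> (\<forall>i j. M$i$j = M$j$i)"
  unfolding symm_def transpose_def by (auto simp: vec_eq_iff)

lemma Agam_comp: "Agam A0 A \<gamma> $ i $ j = A0$i$j + (\<Sum>k\<in>UNIV. \<gamma>$k * A k$i$j)"
  by (simp add: Agam_def sum_component)

lemma Agam_mv: "Agam A0 A \<gamma> *v y = A0 *v y + (\<Sum>k\<in>UNIV. \<gamma>$k *\<^sub>R (A k *v y))"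
proof -
  have "(Agam A0 A \<gamma> *v y)$i = (A0 *v y)$i + (\<Sum>k\<in>UNIV. \<gamma>$k * (A k *v y)$i)" for i
  proof -
    have "(Agam A0 A \<gamma> *v y)$i = (\<Sum>j\<in>UNIV. A0$i$j * y$j + (\<Sum>k\<in>UNIV. \<gamma>$k * (A k$i$j * y$j)))"
      by (simp add: matrix_vector_mult_def Agam_comp distrib_right sum_distrib_right mult.assoc)
    also have "\<dots> = (\<Sum>j\<in>UNIV. A0$i$j * y$j) + (\<Sum>j\<in>UNIV. \<Sum>k\<in>UNIV. \<gamma>$k * (A k$i$j * y$j))"
      by (rule sum.distrib)
    also have "(\<Sum>j\<in>UNIV. \<Sum>k\<in>UNIV. \<gamma>$k * (A k$i$j * y$j)) = (\<Sum>k\<in>UNIV. \<Sum>j\<in>UNIV. \<gamma>$k * (A k$i$j * y$j))"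
      by (rule sum.swap)
    finally show ?thesis by (simp add: matrix_vector_mult_def sum_distrib_left)
  qed
  thus ?thesis by (simp add: vec_eq_iff sum_component)
qed

lemma inner_Agam: "z \<bullet> (Agam A0 A \<gamma> *v y) = z \<bullet> (A0 *v y) + (\<Sum>k\<in>UNIV. \<gamma>$k * (z \<bullet> (A k *v y)))"
  by (simp add: Agam_mv inner_add_right inner_sum_right)

lemma inner_bgam: "bgam b0 b \<gamma> \<bullet> y = b0 \<bullet> y + (\<Sum>k\<in>UNIV. \<gamma>$k * (b k \<bullet> y))"
  by (simp add: bgam_def inner_add_left inner_sum_left)

lemma symm_Agam: assumes "symm A0" "\<forall>i. symm (A i)" shows "symm (Agam A0 A \<gamma>)"
  using assms by (simp add: symm_iff Agam_comp)

lemma frob_Agam: "frob (Agam A0 A \<gamma>) Z = frob A0 Z + (\<Sum>k\<in>UNIV. \<gamma>$k * frob (A k) Z)"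
proof -
  have "frob (Agam A0 A \<gamma>) Z = (\<Sum>i\<in>UNIV. \<Sum>j\<in>UNIV. A0$i$j * Z$i$j + (\<Sum>k\<in>UNIV. \<gamma>$k * (A k$i$j * Z$i$j)))"
    by (simp add: frob_def Agam_comp distrib_right sum_distrib_right mult.assoc)
  also have "\<dots> = frob A0 Z + (\<Sum>i\<in>UNIV. \<Sum>j\<in>UNIV. \<Sum>k\<in>UNIV. \<gamma>$k * (A k$i$j * Z$i$j))"
    by (simp add: frob_def sum.distrib)
  also have "(\<Sum>i\<in>UNIV. \<Sum>j\<in>UNIV. \<Sum>k\<in>UNIV. \<gamma>$k * (A k$i$j * Z$i$j)) = (\<Sum>i\<in>UNIV. \<Sum>k\<in>UNIV. \<Sum>j\<in>UNIV. \<gamma>$k * (A k$i$j * Z$i$j))"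
    by (rule sum.cong[OF refl], rule sum.swap)
  also have "\<dots> = (\<Sum>k\<in>UNIV. \<Sum>i\<in>UNIV. \<Sum>j\<in>UNIV. \<gamma>$k * (A k$i$j * Z$i$j))"
    by (rule sum.swap)
  finally show ?thesis by (simp add: frob_def sum_distrib_left)
qed

lemma psd_add: "psd P \<Longrightarrow> psd Q \<Longrightarrow> psd (P + Q)"
  by (simp add: psd_def matrix_vector_mult_add_rdistrib inner_add_right add_nonneg_nonneg)

lemma psd_scale: "psd P \<Longrightarrow> 0 \<le> r \<Longrightarrow> psd (r *\<^sub>R P)"
  by (simp add: psd_def scaleR_mv)

lemma pd_psd: "pd P \<Longrightarrow> psd P"
  unfolding pd_def psd_def by (metis inner_zero_left matrix_vector_mult_0_right order.refl less_imp_le)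

lemma weak_duality:
  assumes symA0: "symm A0" and symA: "\<forall>i. symm (A i)"
    and hin: "(x, t) \<in> D_SDP A0 b0 c0 A b c MI"
    and g: "\<gamma> \<in> Gamma A0 A MI"
  shows "qgam A0 b0 c0 A b c \<gamma> x \<le> 2 * t"
proof -
  obtain X where sX: "symm X" and pY: "psd (border 1 x X)"
    and h0: "frob (border c0 b0 A0) (border 1 x X) \<le> 2 * t"
    and hI: "\<forall>i\<in>MI. frob (border (c i) (b i) (A i)) (border 1 x X) \<le> 0"
    and hE: "\<forall>i\<in>- MI. frob (border (c i) (b i) (A i)) (border 1 x X) = 0"
    using hin unfolding D_SDP_def Let_def by blast
  define Z where "Z = X - outer x x"
  have pZ: "psd Z" using psd_border_Z[OF pY] by (simp add: Z_def)
  have T: "frob (border cc bb AA) (border 1 x X) = qf AA bb cc x + frob AA Z" for cc bb AA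
    by (simp add: frob_border Z_def frob_diff2 frob_outer2 qf_def)
  have gp: "psd (Agam A0 A \<gamma>)" and gnn: "\<forall>i\<in>MI. 0 \<le> \<gamma>$i" using g by (auto simp: Gamma_def)
  have fz: "0 \<le> frob (Agam A0 A \<gamma>) Z"
    by (rule frob_psd_nonneg[OF symm_Agam[OF symA0 symA] gp pZ])
  have each: "\<gamma>$i * frob (border (c i) (b i) (A i)) (border 1 x X) \<le> 0" for i
  proof (cases "i \<in> MI")
    case True thus ?thesis using hI gnn by (simp add: mult_nonneg_nonpos)
  next
    case False thus ?thesis using hE by simp
  qed
  have "qgam A0 b0 c0 A b c \<gamma> x + frob (Agam A0 A \<gamma>) Z
      = frob (border c0 b0 A0) (border 1 x X) + (\<Sum>i\<in>UNIV. \<gamma>$i * frob (border (c i) (b i) (A i)) (border 1 x X))"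
    by (simp add: T qgam_def frob_Agam algebra_simps sum.distrib)
  also have "\<dots> \<le> 2 * t + 0" using h0 sum_nonpos[of UNIV, OF each] by (intro add_mono) auto
  finally show ?thesis using fz by simp
qed

definition Lv :: "real^'n^'n \<Rightarrow> ('m::finite \<Rightarrow> real^'n^'n) \<Rightarrow> real^'n \<Rightarrow> real^('m option)" where
  "Lv A0 A v = (\<chi> k. case k of None \<Rightarrow> v \<bullet> (A0 *v v) | Some i \<Rightarrow> v \<bullet> (A i *v v))"

definition Lm :: "real^'n^'n \<Rightarrow> ('m::finite \<Rightarrow> real^'n^'n) \<Rightarrow> real^'n^'n \<Rightarrow> real^('m option)" where
  "Lm A0 A Z = (\<chi> k. case k of None \<Rightarrow> frob A0 Z | Some i \<Rightarrow> frob (A i) Z)"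

lemma inner_opt: fixes a y :: "real^('m::finite option)"
  shows "a \<bullet> y = a$None * y$None + (\<Sum>i\<in>UNIV. a$Some i * y$Some i)"
  by (simp add: inner_vec_def sum_option)

lemma Lm_outer: "Lm A0 A (outer v v) = Lv A0 A v"
  by (simp add: Lm_def Lv_def frob_outer2 vec_eq_iff split: option.splits)

lemma psd_from_unit:
  fixes M :: "real^'n^'n"
  assumes "\<And>u. u \<in> sphere 0 1 \<Longrightarrow> 0 \<le> u \<bullet> (M *v u)"
  shows "psd M"
  unfolding psd_def
proof
  fix v :: "real^'n"
  show "0 \<le> v \<bullet> (M *v v)"
  proof (cases "v = 0")
    case True thus ?thesis by simp
  next
    case False
    define u where "u = (1 / norm v) *\<^sub>R v"
    have "u \<in> sphere 0 1" using False by (simp add: u_def)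
    hence "0 \<le> u \<bullet> (M *v u)" by (rule assms)
    moreover have "u \<bullet> (M *v u) = (v \<bullet> (M *v v)) / (norm v)^2"
      by (simp add: u_def matrix_vector_mult_scaleR power2_eq_square)
    ultimately show ?thesis using False by (simp add: zero_le_divide_iff)
  qed
qed

lemma symm_outer: "symm (outer x x)"
  by (simp add: symm_iff outer_def mult.commute)

lemma strong_duality:
  fixes A0 :: "real^'n^'n" and b0 :: "real^'n" and c0 :: real
    and A :: "'m::finite \<Rightarrow> real^'n^'n" and b :: "'m \<Rightarrow> real^'n" and c :: "'m \<Rightarrow> real"
    and MI :: "'m set" and x :: "real^'n" and t :: real
  assumes gs: "\<gamma>s \<in> Gamma A0 A MI" and gspd: "pd (Agam A0 A \<gamma>s)"
    and bound: "\<forall>\<gamma>\<in>Gamma A0 A MI. qgam A0 b0 c0 A b c \<gamma> x \<le> 2 * t"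
  shows "(x, t) \<in> D_SDP A0 b0 c0 A b c MI"
proof -
  define Ort where "Ort = {z::real^('m option). 0 \<le> z$None \<and> (\<forall>i\<in>MI. 0 \<le> z$Some i) \<and> (\<forall>i. i \<notin> MI \<longrightarrow> z$Some i = 0)}"
  define R where "R = {Lm A0 A Z + z | Z z. symm Z \<and> psd Z \<and> z \<in> Ort}"
  define T where "T = (Lv A0 A) ` sphere 0 1 \<union> {axis None 1} \<union> (\<lambda>i. axis (Some i) 1) ` MI"
  have Lm_lin: "Lm A0 A (u *\<^sub>R Z + w *\<^sub>R W) = u *\<^sub>R Lm A0 A Z + w *\<^sub>R Lm A0 A W" for u w Z W
    by (simp add: Lm_def vec_eq_iff frob_def sum.distrib sum_distrib_left algebra_simps split: option.splits)
  have convR: "convex R"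
    unfolding convex_def
  proof (intro allI impI ballI)
    fix y1 y2 and u w :: real assume y1: "y1 \<in> R" and y2: "y2 \<in> R" and uw: "0 \<le> u" "0 \<le> w" "u + w = 1"
    obtain Z1 z1 where 1: "y1 = Lm A0 A Z1 + z1" "symm Z1" "psd Z1" "z1 \<in> Ort" using y1 R_def by blast
    obtain Z2 z2 where 2: "y2 = Lm A0 A Z2 + z2" "symm Z2" "psd Z2" "z2 \<in> Ort" using y2 R_def by blast
    have "u *\<^sub>R y1 + w *\<^sub>R y2 = Lm A0 A (u *\<^sub>R Z1 + w *\<^sub>R Z2) + (u *\<^sub>R z1 + w *\<^sub>R z2)"
      by (simp add: 1 2 Lm_lin algebra_simps)
    moreover have "symm (u *\<^sub>R Z1 + w *\<^sub>R Z2)" using 1 2 by (simp add: symm_iff)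
    moreover have "psd (u *\<^sub>R Z1 + w *\<^sub>R Z2)" using 1 2 uw by (intro psd_add psd_scale) auto
    moreover have "u *\<^sub>R z1 + w *\<^sub>R z2 \<in> Ort" using 1 2 uw by (auto simp: Ort_def)
    ultimately show "u *\<^sub>R y1 + w *\<^sub>R y2 \<in> R" unfolding R_def by blast
  qed
  have conicR: "conic R"
    unfolding conic_def
  proof (intro allI impI)
    fix y and u :: real assume y: "y \<in> R" and u: "0 \<le> u"
    obtain Z z where 1: "y = Lm A0 A Z + z" "symm Z" "psd Z" "z \<in> Ort" using y R_def by blast
    have "u *\<^sub>R y = Lm A0 A (u *\<^sub>R Z + 0 *\<^sub>R Z) + u *\<^sub>R z" using Lm_lin[of u Z 0 Z] by (simp add: 1 algebra_simps)
    moreover have "symm (u *\<^sub>R Z + 0 *\<^sub>R Z)" using 1 by (simp add: symm_iff)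
    moreover have "psd (u *\<^sub>R Z + 0 *\<^sub>R Z)" using 1 u by (simp add: psd_scale)
    moreover have "u *\<^sub>R z \<in> Ort" using 1 u by (auto simp: Ort_def)
    ultimately show "u *\<^sub>R y \<in> R" unfolding R_def by blast
  qed
  have O0: "0 \<in> Ort" by (simp add: Ort_def)
  have TR: "T \<subseteq> R"
  proof
    fix y assume "y \<in> T"
    then consider (a) v where "y = Lv A0 A v" | (b) "y = axis None 1" | (c) i where "i \<in> MI" "y = axis (Some i) 1"
      unfolding T_def by blast
    thus "y \<in> R"
    proof cases
      case a
      have "y = Lm A0 A (outer v v) + 0" by (simp add: a Lm_outer)
      moreover have "psd (outer v v)" by (simp add: psd_def quad_outer)
      ultimately show ?thesis using O0 symm_outer unfolding R_def by blast
    next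
      case b
      have "y = Lm A0 A 0 + axis None 1" by (simp add: b Lm_def frob_def vec_eq_iff split: option.splits)
      moreover have "axis None 1 \<in> Ort" by (simp add: Ort_def axis_def)
      moreover have "psd (0::real^'n^'n)" "symm (0::real^'n^'n)" by (simp_all add: psd_def symm_iff)
      ultimately show ?thesis unfolding R_def by blast
    next
      case c
      have "y = Lm A0 A 0 + axis (Some i) 1" by (simp add: c Lm_def frob_def vec_eq_iff split: option.splits)
      moreover have "axis (Some i) 1 \<in> Ort" using c by (simp add: Ort_def axis_def)
      moreover have "psd (0::real^'n^'n)" "symm (0::real^'n^'n)" by (simp_all add: psd_def symm_iff)
      ultimately show ?thesis unfolding R_def by blast
    qed
  qed
  have contLv: "continuous_on S (Lv A0 A)" for S
    unfolding Lv_def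
    by (rule continuous_on_vec_lambda, case_tac i)
       (auto intro!: continuous_intros matrix_vector_mult_linear_continuous_on)
  have compT: "compact T"
    unfolding T_def
    by (intro compact_Un compact_continuous_image[OF contLv] compact_sphere finite_imp_compact) auto
  have gsnn: "\<forall>i\<in>MI. 0 \<le> \<gamma>s$i" using gs by (simp add: Gamma_def)
  define f where "f = (\<lambda>v::real^'n. v \<bullet> (Agam A0 A \<gamma>s *v v))"
  define g where "g = (\<lambda>v::real^'n. \<Sum>i\<in>MI. v \<bullet> (A i *v v))"
  have contf: "continuous_on S f" for S unfolding f_def
    by (auto intro!: continuous_intros matrix_vector_mult_linear_continuous_on)
  have contg: "continuous_on S (\<lambda>v. \<bar>g v\<bar>)" for S unfolding g_def
    by (auto intro!: continuous_intros matrix_vector_mult_linear_continuous_on)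
  have ne: "sphere (0::real^'n) 1 \<noteq> {}" by simp
  obtain vmin where vmin: "vmin \<in> sphere 0 1" "\<And>u. u \<in> sphere 0 1 \<Longrightarrow> f vmin \<le> f u"
    using continuous_attains_inf[OF compact_sphere ne contf] by blast
  obtain vmax where vmax: "vmax \<in> sphere 0 1" "\<And>u. u \<in> sphere 0 1 \<Longrightarrow> \<bar>g u\<bar> \<le> \<bar>g vmax\<bar>"
    using continuous_attains_sup[OF compact_sphere ne contg] by blast
  define mu where "mu = f vmin"
  define B where "B = \<bar>g vmax\<bar>"
  have mupos: "mu > 0"
  proof -
    have "vmin \<noteq> 0" using vmin(1) by auto
    thus ?thesis using gspd unfolding pd_def mu_def f_def by blast
  qed
  have Bnn: "B \<ge> 0" by (simp add: B_def)
  define del where "del = mu / (2 * (B + 1))"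
  have delpos: "del > 0" using mupos Bnn by (simp add: del_def)
  have delB: "del * B < mu"
  proof -
    have "0 \<le> B * mu" using mupos Bnn by simp
    have "mu * B < mu * (2 * (B + 1))" using mupos Bnn by (intro mult_strict_left_mono) auto
    thus ?thesis using mupos Bnn by (simp add: del_def divide_less_eq mult.commute)
  qed
  define wv :: "real^('m option)" where
    "wv = (\<chi> k. case k of None \<Rightarrow> 1 | Some i \<Rightarrow> \<gamma>s$i + (if i \<in> MI then del else 0))"
  have wLv: "wv \<bullet> Lv A0 A v = f v + del * g v" for v
  proof -
    have "wv \<bullet> Lv A0 A v = v \<bullet> (A0 *v v) + (\<Sum>i\<in>UNIV. (\<gamma>s$i + (if i \<in> MI then del else 0)) * (v \<bullet> (A i *v v)))"
      by (simp add: inner_opt wv_def Lv_def)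
    also have "\<dots> = f v + (\<Sum>i\<in>UNIV. (if i \<in> MI then del else 0) * (v \<bullet> (A i *v v)))"
      by (simp add: f_def inner_Agam distrib_right sum.distrib)
    also have "(\<Sum>i\<in>UNIV. (if i \<in> MI then del else 0) * (v \<bullet> (A i *v v))) = del * g v"
    proof -
      have "(\<Sum>i\<in>UNIV. (if i \<in> MI then del else 0) * (v \<bullet> (A i *v v))) = (\<Sum>i\<in>UNIV. if i \<in> MI then del * (v \<bullet> (A i *v v)) else 0)"
        by (rule sum.cong) auto
      also have "\<dots> = (\<Sum>i\<in>UNIV \<inter> MI. del * (v \<bullet> (A i *v v)))" by (rule sum.inter_restrict[symmetric]) simp
      finally show ?thesis by (simp add: g_def sum_distrib_left)
    qed
    finally show ?thesis .
  qed
  have Tpos: "\<forall>y\<in>T. 0 < wv \<bullet> y"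
  proof
    fix y assume "y \<in> T"
    then consider (a) v where "v \<in> sphere 0 1" "y = Lv A0 A v" | (b) "y = axis None 1" | (c) i where "i \<in> MI" "y = axis (Some i) 1"
      unfolding T_def by blast
    thus "0 < wv \<bullet> y"
    proof cases
      case a
      have "f v \<ge> mu" using vmin a mu_def by auto
      moreover have "\<bar>g v\<bar> \<le> B" using vmax a B_def by auto
      hence "del * g v \<ge> - (del * B)" using delpos
        by (smt (verit) mult_left_mono abs_le_D2 mult_minus_right)
      ultimately show ?thesis using a wLv delB by simp
    next
      case b thus ?thesis by (simp add: inner_axis wv_def)
    next
      case c thus ?thesis using gsnn delpos by (simp add: inner_axis wv_def add_nonneg_pos)
    qed
  qed
  have hullpos: "convex hull T \<subseteq> {y. 0 < wv \<bullet> y}"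
    by (rule hull_minimal) (use Tpos convex_halfspace_gt in auto)
  have T0: "0 \<notin> convex hull T" using hullpos by auto
  define K where "K = conic hull (convex hull T)"
  have closedK: "closed K" unfolding K_def
    by (rule closed_conic_hull) (use T0 compact_convex_hull[OF compT] in auto)
  have convK: "convex K" unfolding K_def by (simp add: convex_conic_hull)
  have Tne: "T \<noteq> {}" by (simp add: T_def)
  have K0: "0 \<in> K" unfolding K_def using Tne by (simp add: conic_hull_contains_0)
  have KR: "K \<subseteq> R"
  proof -
    have "convex hull T \<subseteq> R" using hull_minimal[of T R convex] TR convR by blast
    hence "K \<subseteq> conic hull R" unfolding K_def by (rule hull_mono)
    thus ?thesis using conicR conic_hull_eq[of R] by simp
  qed
  have TK: "T \<subseteq> K" unfolding K_def
    by (meson hull_subset subset_trans)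
  have conicK: "conic K" unfolding K_def by (rule conic_conic_hull)
  define p :: "real^('m option)" where
    "p = (\<chi> k. case k of None \<Rightarrow> 2 * t - qf A0 b0 c0 x | Some i \<Rightarrow> - qf (A i) (b i) (c i) x)"
  show ?thesis
  proof (cases "p \<in> K")
    case True
    then obtain Z z where Zo: "p = Lm A0 A Z + z" "symm Z" "psd Z" "z \<in> Ort" using KR R_def by blast
    define X where "X = outer x x + Z"
    have sX: "symm X" using Zo symm_outer[of x] by (simp add: X_def symm_iff)
    have pY: "psd (border 1 x X)" unfolding X_def by (rule psd_border_from_Z[OF Zo(3)])
    have T: "frob (border cc bb AA) (border 1 x X) = qf AA bb cc x + frob AA Z" for cc bb AA
      by (simp add: frob_border X_def frob_add2 frob_outer2 qf_def)
    have pN: "p$None = frob A0 Z + z$None" using Zo(1) by (simp add: Lm_def)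
    have pS: "p$Some i = frob (A i) Z + z$Some i" for i using Zo(1) by (simp add: Lm_def)
    have "frob (border c0 b0 A0) (border 1 x X) \<le> 2 * t"
      using pN Zo(4) by (simp add: T p_def Ort_def)
    moreover have Ti: "frob (border (c i) (b i) (A i)) (border 1 x X) = - z$Some i" for i
      using pS[of i] by (simp add: T p_def)
    moreover have "\<forall>i\<in>MI. frob (border (c i) (b i) (A i)) (border 1 x X) \<le> 0"
      using Zo(4) by (simp add: Ti Ort_def)
    moreover have "\<forall>i\<in>- MI. frob (border (c i) (b i) (A i)) (border 1 x X) = 0"
      using Zo(4) by (simp add: Ti Ort_def)
    ultimately show ?thesis using sX pY unfolding D_SDP_def Let_def by blast
  next
    case False
    obtain a bb where ab: "a \<bullet> p < bb" "\<forall>y\<in>K. bb < a \<bullet> y"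
      using separating_hyperplane_closed_point[OF convK closedK False] by blast
    have bbneg: "bb < 0" using ab(2) K0 by auto
    have Knn: "0 \<le> a \<bullet> y" if "y \<in> K" for y
    proof (rule ccontr)
      assume "\<not> 0 \<le> a \<bullet> y"
      hence neg: "a \<bullet> y < 0" by simp
      define r where "r = bb / (a \<bullet> y)"
      have r: "r > 0" using neg bbneg by (simp add: r_def divide_neg_neg)
      have "r *\<^sub>R y \<in> K" using conicK that r by (simp add: conic_def)
      hence "bb < a \<bullet> (r *\<^sub>R y)" using ab(2) by blast
      moreover have "a \<bullet> (r *\<^sub>R y) = bb" using neg by (simp add: r_def)
      ultimately show False by simp
    qed
    have aN: "0 \<le> a$None" using Knn[of "axis None 1"] TK by (simp add: T_def inner_axis)
    have aS: "0 \<le> a$Some i" if "i \<in> MI" for i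
      using Knn[of "axis (Some i) 1"] TK that by (auto simp: T_def inner_axis)
    have aLv: "0 \<le> a \<bullet> Lv A0 A v" for v
    proof (cases "v = 0")
      case True thus ?thesis by (simp add: Lv_def inner_opt)
    next
      case False
      define u where "u = (1 / norm v) *\<^sub>R v"
      have "u \<in> sphere 0 1" using False by (simp add: u_def)
      hence "Lv A0 A u \<in> K" using TK T_def by blast
      hence "0 \<le> a \<bullet> Lv A0 A u" by (rule Knn)
      moreover have "Lv A0 A u = (1 / (norm v)^2) *\<^sub>R Lv A0 A v"
        by (simp add: u_def Lv_def vec_eq_iff matrix_vector_mult_scaleR power2_eq_square split: option.splits)
      ultimately show ?thesis using False by (simp add: zero_le_divide_iff)
    qed
    have aLv': "0 \<le> a$None * (v \<bullet> (A0 *v v)) + (\<Sum>i\<in>UNIV. a$Some i * (v \<bullet> (A i *v v)))" for v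
      using aLv[of v] by (simp add: inner_opt Lv_def)
    have ap: "a$None * (2 * t - qf A0 b0 c0 x) - (\<Sum>i\<in>UNIV. a$Some i * qf (A i) (b i) (c i) x) < 0"
      using ab(1) bbneg by (simp add: inner_opt p_def sum_negf)
    show ?thesis
    proof (cases "a$None = 0")
      case False
      hence a0: "a$None > 0" using aN by simp
      define \<gamma> where "\<gamma> = (\<chi> i. a$Some i / a$None)"
      have "psd (Agam A0 A \<gamma>)"
        unfolding psd_def
      proof
        fix v
        have "v \<bullet> (Agam A0 A \<gamma> *v v) = (a$None * (v \<bullet> (A0 *v v)) + (\<Sum>i\<in>UNIV. a$Some i * (v \<bullet> (A i *v v)))) / a$None"
          using a0 by (simp add: inner_Agam \<gamma>_def add_divide_distrib sum_divide_distrib)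
        thus "0 \<le> v \<bullet> (Agam A0 A \<gamma> *v v)" using aLv'[of v] a0 by simp
      qed
      moreover have "\<forall>i\<in>MI. 0 \<le> \<gamma>$i" using aS a0 by (simp add: \<gamma>_def)
      ultimately have "\<gamma> \<in> Gamma A0 A MI" by (simp add: Gamma_def)
      hence le: "qgam A0 b0 c0 A b c \<gamma> x \<le> 2 * t" using bound by blast
      have "qgam A0 b0 c0 A b c \<gamma> x = qf A0 b0 c0 x + (\<Sum>i\<in>UNIV. a$Some i * qf (A i) (b i) (c i) x) / a$None"
        using a0 by (simp add: qgam_def \<gamma>_def sum_divide_distrib)
      hence "a$None * qgam A0 b0 c0 A b c \<gamma> x = a$None * qf A0 b0 c0 x + (\<Sum>i\<in>UNIV. a$Some i * qf (A i) (b i) (c i) x)"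
        using a0 by (simp add: distrib_left)
      moreover have "a$None * qgam A0 b0 c0 A b c \<gamma> x \<le> a$None * (2 * t)" using le a0 by simp
      ultimately show ?thesis using ap by (simp add: algebra_simps)
    next
      case True
      define d where "d = (\<chi> i. a$Some i)"
      define D where "D = (\<Sum>i\<in>UNIV. d$i * qf (A i) (b i) (c i) x)"
      have Dpos: "D > 0" using ap True by (simp add: D_def d_def)
      define q0 where "q0 = qgam A0 b0 c0 A b c \<gamma>s x"
      define l where "l = max 0 ((2 * t - q0 + 1) / D)"
      have l1: "l \<ge> (2 * t - q0 + 1) / D" by (simp add: l_def)
      have l: "l \<ge> 0" "l * D \<ge> 2 * t - q0 + 1"
      proof -
        show "l \<ge> 0" by (simp add: l_def)
        have "(2 * t - q0 + 1) / D * D \<le> l * D" using l1 Dpos by (intro mult_right_mono) auto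
        thus "l * D \<ge> 2 * t - q0 + 1" using Dpos by simp
      qed
      define \<gamma> where "\<gamma> = \<gamma>s + l *\<^sub>R d"
      have "psd (Agam A0 A \<gamma>)"
        unfolding psd_def
      proof
        fix v
        have "v \<bullet> (Agam A0 A \<gamma> *v v) = v \<bullet> (Agam A0 A \<gamma>s *v v) + l * (\<Sum>i\<in>UNIV. a$Some i * (v \<bullet> (A i *v v)))"
          by (simp add: inner_Agam \<gamma>_def d_def distrib_right sum.distrib sum_distrib_left mult.assoc)
        moreover have "0 \<le> v \<bullet> (Agam A0 A \<gamma>s *v v)" using gs by (simp add: Gamma_def psd_def)
        moreover have "0 \<le> (\<Sum>i\<in>UNIV. a$Some i * (v \<bullet> (A i *v v)))" using aLv'[of v] True by simp
        ultimately show "0 \<le> v \<bullet> (Agam A0 A \<gamma> *v v)" using l by simp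
      qed
      moreover have "\<forall>i\<in>MI. 0 \<le> \<gamma>$i" using aS gsnn l by (simp add: \<gamma>_def d_def)
      ultimately have "\<gamma> \<in> Gamma A0 A MI" by (simp add: Gamma_def)
      hence le: "qgam A0 b0 c0 A b c \<gamma> x \<le> 2 * t" using bound by blast
      have "qgam A0 b0 c0 A b c \<gamma> x = q0 + l * D"
        by (simp add: qgam_def q0_def D_def \<gamma>_def distrib_right sum.distrib sum_distrib_left mult.assoc)
      thus ?thesis using le l by simp
    qed
  qed
qed

lemma farkas_affine:
  fixes H :: "('a::euclidean_space \<times> real) set" and cc :: 'a and d :: real
  assumes fin: "finite H" and ne: "\<forall>h\<in>H. fst h \<bullet> \<gamma>0 \<le> snd h"
    and le: "\<And>\<gamma>. \<forall>h\<in>H. fst h \<bullet> \<gamma> \<le> snd h \<Longrightarrow> cc \<bullet> \<gamma> + d \<le> 0"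
  shows "\<exists>y. (\<forall>h\<in>H. 0 \<le> y h) \<and> cc = (\<Sum>h\<in>H. y h *\<^sub>R fst h) \<and> d + (\<Sum>h\<in>H. y h * snd h) \<le> 0"
proof -
  define T where "T = insert (0::'a, 1::real) H"
  have finT: "finite T" using fin by (simp add: T_def)
  have Tne: "T \<noteq> {}" by (simp add: T_def)
  define K where "K = convex_cone hull T"
  have K_eq: "K = conic hull (convex hull T)" unfolding K_def by (rule convex_cone_hull_separate_nonempty[OF Tne])
  have closedK: "closed K" unfolding K_def
    by (rule polyhedron_imp_closed, rule polyhedron_convex_cone_hull[OF finT])
  have convK: "convex K" unfolding K_def by (rule convex_convex_cone_hull)
  have conicK: "conic K" unfolding K_eq by (rule conic_conic_hull)
  have K0: "0 \<in> K" unfolding K_eq using Tne by (simp add: conic_hull_contains_0)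
  have TK: "T \<subseteq> K" unfolding K_def by (rule hull_subset)
  show ?thesis
  proof (cases "(cc, -d) \<in> K")
    case True
    then obtain r y where ry: "0 \<le> r" "y \<in> convex hull T" "(cc, -d) = r *\<^sub>R y"
      unfolding K_eq conic_hull_explicit by blast
    then obtain u where u: "\<forall>x\<in>T. 0 \<le> u x" "(\<Sum>x\<in>T. u x *\<^sub>R x) = y"
      unfolding convex_hull_finite[OF finT] by blast
    define w where "w = (\<lambda>x. r * u x)"
    have wnn: "\<forall>x\<in>T. 0 \<le> w x" using u ry by (simp add: w_def)
    have "(\<Sum>x\<in>T. (r * u x) *\<^sub>R x) = r *\<^sub>R (\<Sum>x\<in>T. u x *\<^sub>R x)" by (simp add: scaleR_sum_right)
    hence eq: "(cc, -d) = (\<Sum>x\<in>T. w x *\<^sub>R x)"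
      using ry u by (simp add: w_def)
    show ?thesis
    proof (cases "(0, 1) \<in> H")
      case True
      hence "T = H" by (auto simp: T_def)
      hence e2: "(cc, -d) = (\<Sum>x\<in>H. w x *\<^sub>R x)" using eq by simp
      have "cc = fst (\<Sum>x\<in>H. w x *\<^sub>R x)" "-d = snd (\<Sum>x\<in>H. w x *\<^sub>R x)"
        unfolding e2[symmetric] by simp_all
      hence "cc = (\<Sum>h\<in>H. w h *\<^sub>R fst h)" "-d = (\<Sum>h\<in>H. w h * snd h)"
        by (simp_all add: fst_sum snd_sum)
      thus ?thesis using wnn \<open>T = H\<close> by (intro exI[of _ w]) auto
    next
      case False
      hence "(\<Sum>x\<in>T. w x *\<^sub>R x) = w (0,1) *\<^sub>R (0,1) + (\<Sum>x\<in>H. w x *\<^sub>R x)"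
        using fin by (simp add: T_def)
      hence e2: "(cc, -d) = w (0,1) *\<^sub>R (0,1) + (\<Sum>x\<in>H. w x *\<^sub>R x)" using eq by simp
      have "cc = fst (w (0,1) *\<^sub>R (0,1) + (\<Sum>x\<in>H. w x *\<^sub>R x))"
        "-d = snd (w (0,1) *\<^sub>R (0,1) + (\<Sum>x\<in>H. w x *\<^sub>R x))"
        unfolding e2[symmetric] by simp_all
      hence "cc = (\<Sum>h\<in>H. w h *\<^sub>R fst h)" "-d = w (0,1) + (\<Sum>h\<in>H. w h * snd h)"
        by (simp_all add: fst_sum snd_sum)
      moreover have "0 \<le> w (0,1)" using wnn by (simp add: T_def)
      ultimately show ?thesis using wnn by (intro exI[of _ w]) (auto simp: T_def)
    qed
  next
    case False
    obtain a bb where ab: "a \<bullet> (cc, -d) < bb" "\<forall>y\<in>K. bb < a \<bullet> y"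
      using separating_hyperplane_closed_point[OF convK closedK False] by blast
    have bbneg: "bb < 0" using ab(2) K0 by auto
    have Knn: "0 \<le> a \<bullet> y" if "y \<in> K" for y
    proof (rule ccontr)
      assume "\<not> 0 \<le> a \<bullet> y"
      hence neg: "a \<bullet> y < 0" by simp
      define r where "r = bb / (a \<bullet> y)"
      have r: "r > 0" using neg bbneg by (simp add: r_def divide_neg_neg)
      have "r *\<^sub>R y \<in> K" using conicK that r unfolding conic_def by (meson less_imp_le)
      hence "bb < a \<bullet> (r *\<^sub>R y)" using ab(2) by blast
      moreover have "a \<bullet> (r *\<^sub>R y) = bb" using neg by (simp add: r_def)
      ultimately show False by simp
    qed
    obtain u \<tau> where a: "a = (u, \<tau>)" by (cases a)
    have tau: "0 \<le> \<tau>" using Knn[of "(0,1)"] TK by (simp add: a T_def)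
    have uh: "0 \<le> u \<bullet> fst h + \<tau> * snd h" if "h \<in> H" for h
      using Knn[of h] TK that by (cases h) (auto simp: a T_def)
    have uc: "u \<bullet> cc - \<tau> * d < 0" using ab(1) bbneg by (simp add: a)
    show ?thesis
    proof (cases "\<tau> = 0")
      case False
      hence tp: "\<tau> > 0" using tau by simp
      define \<gamma> where "\<gamma> = (- 1 / \<tau>) *\<^sub>R u"
      have "\<forall>h\<in>H. fst h \<bullet> \<gamma> \<le> snd h"
      proof
        fix h assume "h \<in> H"
        hence "- (u \<bullet> fst h) \<le> \<tau> * snd h" using uh by fastforce
        hence "- (u \<bullet> fst h) / \<tau> \<le> snd h" using tp by (subst divide_le_eq) (simp add: mult.commute)
        thus "fst h \<bullet> \<gamma> \<le> snd h" by (simp add: \<gamma>_def inner_commute)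
      qed
      hence "cc \<bullet> \<gamma> + d \<le> 0" by (rule le)
      moreover have "cc \<bullet> \<gamma> + d = (\<tau> * d - u \<bullet> cc) / \<tau>"
        using tp by (simp add: \<gamma>_def inner_commute field_simps)
      moreover have "(\<tau> * d - u \<bullet> cc) / \<tau> > 0" using tp uc by simp
      ultimately show ?thesis by simp
    next
      case True
      hence uh0: "0 \<le> u \<bullet> fst h" if "h \<in> H" for h using uh that by simp
      have uc0: "cc \<bullet> u < 0" using uc True by (simp add: inner_commute)
      define e where "e = cc \<bullet> \<gamma>0 + d"
      define l where "l = (\<bar>e\<bar> + 1) / (- (cc \<bullet> u))"
      have lp: "l > 0" using uc0 unfolding l_def by (intro divide_pos_pos) auto
      define \<gamma> where "\<gamma> = \<gamma>0 - l *\<^sub>R u"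
      have "\<forall>h\<in>H. fst h \<bullet> \<gamma> \<le> snd h"
      proof
        fix h assume h: "h \<in> H"
        have "0 \<le> l * (u \<bullet> fst h)" using lp uh0[OF h] by simp
        thus "fst h \<bullet> \<gamma> \<le> snd h" using ne h by (auto simp: \<gamma>_def inner_diff_right inner_commute)
      qed
      hence "cc \<bullet> \<gamma> + d \<le> 0" by (rule le)
      moreover have "cc \<bullet> \<gamma> + d = e + (\<bar>e\<bar> + 1)"
      proof -
        have "cc \<bullet> \<gamma> + d = e - l * (cc \<bullet> u)" by (simp add: \<gamma>_def e_def inner_diff_right)
        moreover have "l * (cc \<bullet> u) = - (\<bar>e\<bar> + 1)" using uc0 by (simp add: l_def)
        ultimately show ?thesis by simp
      qed
      ultimately show ?thesis by simp
    qed
  qed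
qed

lemma polyhedron_pairs:
  fixes G :: "'a::euclidean_space set"
  assumes "polyhedron G"
  shows "\<exists>H. finite H \<and> G = {\<gamma>. \<forall>h\<in>H. fst h \<bullet> \<gamma> \<le> snd h}"
proof -
  obtain Fam where F0: "finite Fam \<and> G = \<Inter> Fam \<and> (\<forall>h\<in>Fam. \<exists>a b. a \<noteq> 0 \<and> h = {x. a \<bullet> x \<le> b})"
    using assms unfolding polyhedron_def by (elim exE) (rule that)
  hence F: "finite Fam" "G = \<Inter> Fam" "\<forall>h\<in>Fam. \<exists>a b. a \<noteq> 0 \<and> h = {x. a \<bullet> x \<le> b}" by auto
  define pick where "pick = (\<lambda>S::'a set. SOME p::'a \<times> real. S = {x. fst p \<bullet> x \<le> snd p})"
  have pk: "S = {x. fst (pick S) \<bullet> x \<le> snd (pick S)}" if "S \<in> Fam" for S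
  proof -
    have "\<exists>a b. a \<noteq> 0 \<and> S = {x. a \<bullet> x \<le> b}" using F(3) that by (rule bspec)
    then obtain a b where "S = {x. a \<bullet> x \<le> b}" by (elim exE conjE)
    hence "\<exists>p. S = {x. fst p \<bullet> x \<le> snd p}" by (intro exI[of _ "(a,b)"]) simp
    thus ?thesis unfolding pick_def by (rule someI_ex)
  qed
  have "G = {\<gamma>. \<forall>h\<in>pick ` Fam. fst h \<bullet> \<gamma> \<le> snd h}"
  proof
    show "G \<subseteq> {\<gamma>. \<forall>h\<in>pick ` Fam. fst h \<bullet> \<gamma> \<le> snd h}"
      using F(2) pk by blast
    show "{\<gamma>. \<forall>h\<in>pick ` Fam. fst h \<bullet> \<gamma> \<le> snd h} \<subseteq> G"
    proof
      fix \<gamma> assume "\<gamma> \<in> {\<gamma>. \<forall>h\<in>pick ` Fam. fst h \<bullet> \<gamma> \<le> snd h}"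
      hence "\<forall>S\<in>Fam. \<gamma> \<in> S" using pk by blast
      thus "\<gamma> \<in> G" using F(2) by (simp add: Inter_iff)
    qed
  qed
  thus ?thesis using F(1) by (intro exI[of _ "pick ` Fam"]) simp
qed

lemma factP:
  fixes G :: "'a::euclidean_space set"
  assumes poly: "polyhedron G" and gle: "\<forall>\<gamma>\<in>G. wg \<bullet> \<gamma> + dg \<le> 0"
    and g0: "\<gamma>0 \<in> G" "wg \<bullet> \<gamma>0 + dg = 0"
    and hz: "\<forall>\<gamma>\<in>G. wg \<bullet> \<gamma> + dg = 0 \<longrightarrow> wh \<bullet> \<gamma> + dh = 0"
  shows "\<exists>C\<ge>0. \<forall>\<gamma>\<in>G. wh \<bullet> \<gamma> + dh \<le> C * (- (wg \<bullet> \<gamma> + dg))"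
proof -
  obtain H where H: "finite H" "G = {\<gamma>. \<forall>h\<in>H. fst h \<bullet> \<gamma> \<le> snd h}"
    using polyhedron_pairs[OF poly] by (elim exE conjE)
  have inG: "\<gamma> \<in> G \<longleftrightarrow> (\<forall>h\<in>H. fst h \<bullet> \<gamma> \<le> snd h)" for \<gamma> using H(2) by simp
  define s where "s = (\<lambda>(h::'a \<times> real) (\<gamma>::'a). snd h - fst h \<bullet> \<gamma>)"
  have snn: "0 \<le> s h \<gamma>" if "\<gamma> \<in> G" "h \<in> H" for h \<gamma> using that inG by (simp add: s_def)
  obtain y where y: "\<forall>h\<in>H. 0 \<le> y h" "wg = (\<Sum>h\<in>H. y h *\<^sub>R fst h)" "dg + (\<Sum>h\<in>H. y h * snd h) \<le> 0"
    using farkas_affine[OF H(1), of \<gamma>0 wg dg] g0(1) gle inG by blast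
  define r where "r = - (dg + (\<Sum>h\<in>H. y h * snd h))"
  have rnn: "0 \<le> r" using y(3) by (simp add: r_def)
  have gform: "wg \<bullet> \<gamma> + dg = - (\<Sum>h\<in>H. y h * s h \<gamma>) - r" for \<gamma>
  proof -
    have "wg \<bullet> \<gamma> = (\<Sum>h\<in>H. y h * (fst h \<bullet> \<gamma>))" by (simp add: y(2) inner_sum_left)
    thus ?thesis by (simp add: r_def s_def right_diff_distrib sum_subtractf)
  qed
  have tnn: "0 \<le> y h * s h \<gamma>" if "\<gamma> \<in> G" "h \<in> H" for h \<gamma> using y(1) snn that by simp
  have sum0: "(\<Sum>h\<in>H. y h * s h \<gamma>0) + r = 0" using gform[of \<gamma>0] g0(2) by simp
  have sumnn: "0 \<le> (\<Sum>h\<in>H. y h * s h \<gamma>0)" using tnn g0(1) by (simp add: sum_nonneg)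
  have r0: "r = 0" using sum0 sumnn rnn by simp
  have t0: "\<forall>h\<in>H. y h * s h \<gamma>0 = 0"
    using sum0 r0 sum_nonneg_eq_0_iff[OF H(1), of "\<lambda>h. y h * s h \<gamma>0"] tnn g0(1) by simp
  define H1 where "H1 = {h\<in>H. y h > 0}"
  define ng where "ng = (\<lambda>h::'a \<times> real. (- fst h, - snd h))"
  define H' where "H' = H \<union> ng ` H1"
  have finH1: "finite H1" using H(1) by (simp add: H1_def)
  have finH': "finite H'" using H(1) finH1 by (simp add: H'_def)
  have injng: "inj ng" by (auto simp: inj_def ng_def prod_eq_iff)
  have inP': "(\<forall>h\<in>H'. fst h \<bullet> \<gamma> \<le> snd h) \<longleftrightarrow> \<gamma> \<in> G \<and> (\<forall>h\<in>H1. s h \<gamma> = 0)" for \<gamma>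
  proof
    assume a: "\<forall>h\<in>H'. fst h \<bullet> \<gamma> \<le> snd h"
    hence gG: "\<gamma> \<in> G" using inG by (simp add: H'_def)
    have "s h \<gamma> = 0" if "h \<in> H1" for h
    proof -
      have "ng h \<in> H'" using that by (simp add: H'_def)
      hence "fst (ng h) \<bullet> \<gamma> \<le> snd (ng h)" using a by blast
      hence "- fst h \<bullet> \<gamma> \<le> - snd h" by (simp add: ng_def)
      moreover have "h \<in> H" using that by (simp add: H1_def)
      ultimately show ?thesis using snn[OF gG] by (simp add: s_def) (smt (verit) inner_minus_left)
    qed
    thus "\<gamma> \<in> G \<and> (\<forall>h\<in>H1. s h \<gamma> = 0)" using gG by blast
  next
    assume a: "\<gamma> \<in> G \<and> (\<forall>h\<in>H1. s h \<gamma> = 0)"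
    show "\<forall>h\<in>H'. fst h \<bullet> \<gamma> \<le> snd h"
    proof
      fix h assume "h \<in> H'"
      then consider "h \<in> H" | h1 where "h1 \<in> H1" "h = ng h1" by (auto simp: H'_def)
      thus "fst h \<bullet> \<gamma> \<le> snd h"
      proof cases
        case 1 thus ?thesis using a inG by blast
      next
        case 2 thus ?thesis using a by (simp add: ng_def s_def)
      qed
    qed
  qed
  have g0P': "\<forall>h\<in>H'. fst h \<bullet> \<gamma>0 \<le> snd h"
    unfolding inP' using g0(1) t0 by (auto simp: H1_def)
  have hP': "wh \<bullet> \<gamma> + dh \<le> 0" if "\<forall>h\<in>H'. fst h \<bullet> \<gamma> \<le> snd h" for \<gamma>
  proof -
    have a: "\<gamma> \<in> G" "\<forall>h\<in>H1. s h \<gamma> = 0" using that inP' by auto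
    have "\<forall>h\<in>H. y h * s h \<gamma> = 0"
    proof
      fix h assume "h \<in> H"
      show "y h * s h \<gamma> = 0"
      proof (cases "y h > 0")
        case True
        hence "h \<in> H1" using \<open>h \<in> H\<close> by (simp add: H1_def)
        thus ?thesis using a(2) by simp
      next
        case False thus ?thesis using y(1) \<open>h \<in> H\<close> by force
      qed
    qed
    hence "(\<Sum>h\<in>H. y h * s h \<gamma>) = 0" by (simp add: sum.neutral)
    hence "wg \<bullet> \<gamma> + dg = 0" using gform[of \<gamma>] r0 by simp
    thus ?thesis using hz a(1) by simp
  qed
  obtain z where z: "\<forall>h\<in>H'. 0 \<le> z h" "wh = (\<Sum>h\<in>H'. z h *\<^sub>R fst h)" "dh + (\<Sum>h\<in>H'. z h * snd h) \<le> 0"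
    using farkas_affine[OF finH' g0P', of wh dh] hP' by blast
  define C where "C = (\<Sum>h\<in>H1. z (ng h) / y h)"
  have zng: "0 \<le> z (ng h)" if "h \<in> H1" for h using z(1) that by (simp add: H'_def)
  have Cnn: "0 \<le> C" unfolding C_def using zng by (auto intro!: sum_nonneg simp: H1_def)
  have main: "wh \<bullet> \<gamma> + dh \<le> C * (- (wg \<bullet> \<gamma> + dg))" if gG: "\<gamma> \<in> G" for \<gamma>
  proof -
    define s' where "s' = (\<lambda>h. snd h - fst h \<bullet> \<gamma>)"
    have "wh \<bullet> \<gamma> + dh = (\<Sum>h\<in>H'. z h * (fst h \<bullet> \<gamma>)) + dh" by (simp add: z(2) inner_sum_left)
    also have "\<dots> \<le> (\<Sum>h\<in>H'. z h * (fst h \<bullet> \<gamma>)) - (\<Sum>h\<in>H'. z h * snd h)" using z(3) by simp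
    also have "\<dots> = (\<Sum>h\<in>H'. - (z h * s' h))" by (simp add: s'_def algebra_simps sum_subtractf sum_negf)
    also have "\<dots> \<le> (\<Sum>h\<in>H'. if h \<in> ng ` H1 then - (z h * s' h) else 0)"
    proof (rule sum_mono)
      fix h assume hH': "h \<in> H'"
      show "- (z h * s' h) \<le> (if h \<in> ng ` H1 then - (z h * s' h) else 0)"
      proof (cases "h \<in> ng ` H1")
        case False
        hence "h \<in> H" using hH' by (simp add: H'_def)
        hence "0 \<le> s' h" using gG inG by (simp add: s'_def)
        thus ?thesis using False z(1) hH' by simp
      qed simp
    qed
    also have "\<dots> = (\<Sum>h\<in>H' \<inter> ng ` H1. - (z h * s' h))" by (rule sum.inter_restrict[symmetric, OF finH'])
    also have "H' \<inter> ng ` H1 = ng ` H1" by (auto simp: H'_def)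
    also have "(\<Sum>h\<in>ng ` H1. - (z h * s' h)) = (\<Sum>h\<in>H1. - (z (ng h) * s' (ng h)))"
      by (rule sum.reindex[OF inj_on_subset[OF injng subset_UNIV], unfolded comp_def])
    also have "\<dots> = (\<Sum>h\<in>H1. z (ng h) * s h \<gamma>)"
      by (rule sum.cong[OF refl]) (simp add: s'_def s_def ng_def algebra_simps)
    also have "\<dots> \<le> (\<Sum>h\<in>H1. C * (y h * s h \<gamma>))"
    proof (rule sum_mono)
      fix h assume h: "h \<in> H1"
      have yp: "y h > 0" and hH: "h \<in> H" using h by (auto simp: H1_def)
      have "z (ng h) / y h \<le> C" unfolding C_def
        by (rule member_le_sum[OF h _ finH1]) (use zng in \<open>auto simp: H1_def\<close>)
      hence "z (ng h) \<le> C * y h" using yp by (simp add: divide_le_eq)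
      moreover have "0 \<le> s h \<gamma>" using snn[OF gG hH] .
      ultimately have "z (ng h) * s h \<gamma> \<le> (C * y h) * s h \<gamma>" by (rule mult_right_mono)
      thus "z (ng h) * s h \<gamma> \<le> C * (y h * s h \<gamma>)" by (simp add: mult.assoc)
    qed
    also have "\<dots> = C * (\<Sum>h\<in>H1. y h * s h \<gamma>)" by (simp add: sum_distrib_left)
    also have "\<dots> \<le> C * (\<Sum>h\<in>H. y h * s h \<gamma>)"
      by (rule mult_left_mono[OF sum_mono2[OF H(1)] Cnn]) (auto simp: H1_def intro: tnn[OF gG])
    also have "\<dots> = C * (- (wg \<bullet> \<gamma> + dg))" using gform[of \<gamma>] r0 by simp
    finally show ?thesis .
  qed
  show ?thesis using Cnn main by blast
qed

lemma exists_v: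
  fixes V B :: "'a::euclidean_space set"
  assumes sV: "subspace V" and bb: "bb \<in> B" and dc: "aff_dim B + 1 \<le> int (dim V)"
  shows "\<exists>v\<in>V. v \<noteq> 0 \<and> (\<forall>y\<in>B. y \<bullet> v = bb \<bullet> v)"
proof -
  define D where "D = (+) (- bb) ` B"
  have ad: "aff_dim B = int (dim D)" unfolding D_def by (rule aff_dim_eq_dim) (simp add: bb hull_inc)
  define W where "W = span D"
  have sW: "subspace W" by (simp add: W_def)
  have dW: "dim W = dim D" by (simp add: W_def)
  have eqp: "{y \<in> UNIV. \<forall>x\<in>W. orthogonal x y} = W\<^sup>\<bottom>" by (simp add: orthogonal_comp_def)
  have d1: "dim (W\<^sup>\<bottom>) + dim W = dim (UNIV :: 'a set)"
    using dim_subspace_orthogonal_to_vectors[OF sW subspace_UNIV subset_UNIV] eqp by simp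
  have d2: "dim {x + y |x y. x \<in> V \<and> y \<in> W\<^sup>\<bottom>} + dim (V \<inter> W\<^sup>\<bottom>) = dim V + dim (W\<^sup>\<bottom>)"
    by (rule dim_sums_Int[OF sV subspace_orthogonal_comp])
  have d3: "dim {x + y |x y. x \<in> V \<and> y \<in> W\<^sup>\<bottom>} \<le> dim (UNIV :: 'a set)"
    by (rule dim_subset) simp
  have "dim (V \<inter> W\<^sup>\<bottom>) \<ge> 1" using d1 d2 d3 dc ad dW by linarith
  hence "\<not> (V \<inter> W\<^sup>\<bottom> \<subseteq> {0})"
  proof (intro notI)
    assume "V \<inter> W\<^sup>\<bottom> \<subseteq> {0}"
    hence "dim (V \<inter> W\<^sup>\<bottom>) = 0" by (rule dim_eq_0[THEN iffD2])
    moreover assume "dim (V \<inter> W\<^sup>\<bottom>) \<ge> 1"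
    ultimately show False by linarith
  qed
  then obtain v where v: "v \<in> V" "v \<in> W\<^sup>\<bottom>" "v \<noteq> 0" by blast
  have "y \<bullet> v = bb \<bullet> v" if "y \<in> B" for y
  proof -
    have "- bb + y \<in> W" using that by (simp add: W_def D_def span_base)
    hence "(- bb + y) \<bullet> v = 0" using v(2) by (simp add: orthogonal_comp_def orthogonal_def)
    thus ?thesis by (simp add: inner_diff_left)
  qed
  thus ?thesis using v by blast
qed

definition affr :: "(real^'m \<Rightarrow> real) \<Rightarrow> bool" where
  "affr f \<longleftrightarrow> (\<exists>w d. \<forall>\<gamma>. f \<gamma> = w \<bullet> \<gamma> + d)"

lemma affr_sum: "affr (\<lambda>\<gamma>. d + (\<Sum>k\<in>UNIV. \<gamma>$k * f k))"
  unfolding affr_def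
  by (rule exI[of _ "\<chi> k. f k"], rule exI[of _ d]) (simp add: inner_vec_def mult.commute)

lemma affr_lin: "affr f \<Longrightarrow> affr g \<Longrightarrow> affr (\<lambda>\<gamma>. a * f \<gamma> + b * g \<gamma> + c)"
  unfolding affr_def
proof (elim exE)
  fix w1 d1 w2 d2 assume f: "\<forall>\<gamma>. f \<gamma> = w1 \<bullet> \<gamma> + d1" and g: "\<forall>\<gamma>. g \<gamma> = w2 \<bullet> \<gamma> + d2"
  show "\<exists>w d. \<forall>\<gamma>. a * f \<gamma> + b * g \<gamma> + c = w \<bullet> \<gamma> + d"
    by (rule exI[of _ "a *\<^sub>R w1 + b *\<^sub>R w2"], rule exI[of _ "a * d1 + b * d2 + c"])
       (simp add: f g inner_add_left algebra_simps)
qed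

lemma factP':
  fixes G :: "(real^'m) set"
  assumes "polyhedron G" "affr g" "affr h" "\<forall>\<gamma>\<in>G. g \<gamma> \<le> 0" "\<gamma>0 \<in> G" "g \<gamma>0 = 0"
    "\<forall>\<gamma>\<in>G. g \<gamma> = 0 \<longrightarrow> h \<gamma> = 0"
  shows "\<exists>C\<ge>0. \<forall>\<gamma>\<in>G. h \<gamma> \<le> C * (- g \<gamma>)"
proof -
  obtain wg dg where g: "\<forall>\<gamma>. g \<gamma> = wg \<bullet> \<gamma> + dg" using assms(2) affr_def by blast
  obtain wh dh where h: "\<forall>\<gamma>. h \<gamma> = wh \<bullet> \<gamma> + dh" using assms(3) affr_def by blast
  show ?thesis using factP[OF assms(1), of wg dg \<gamma>0 wh dh] assms(4-7) by (simp add: g h)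
qed

lemma qf_exp:
  "qf M w c (x + s *\<^sub>R v) = qf M w c x + s * (x \<bullet> (M *v v) + v \<bullet> (M *v x) + 2 * (w \<bullet> v)) + s^2 * (v \<bullet> (M *v v))"
  by (simp add: qf_def matrix_vector_right_distrib matrix_vector_mult_scaleR inner_add_left inner_add_right
      power2_eq_square algebra_simps)

lemma quad_bound:
  fixes a bq cq s :: real
  assumes a: "a > 0" and le: "cq + s * bq + s^2 * a \<le> 0"
  shows "\<bar>s\<bar> \<le> (\<bar>bq\<bar> + \<bar>cq\<bar>) / a + 1"
proof (cases "\<bar>s\<bar> \<le> 1")
  case True
  have "0 \<le> (\<bar>bq\<bar> + \<bar>cq\<bar>) / a" using a by simp
  thus ?thesis using True by linarith
next
  case False
  hence s1: "\<bar>s\<bar> > 1" by simp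
  have "a * (\<bar>s\<bar> * \<bar>s\<bar>) = s^2 * a" by (simp add: power2_eq_square abs_mult_self_eq)
  also have "\<dots> \<le> - cq - s * bq" using le by simp
  also have "\<dots> \<le> \<bar>cq\<bar> + \<bar>s * bq\<bar>" using abs_ge_minus_self[of cq] abs_ge_minus_self[of "s * bq"] by linarith
  also have "\<dots> = \<bar>cq\<bar> + \<bar>s\<bar> * \<bar>bq\<bar>" by (simp add: abs_mult)
  also have "\<dots> \<le> \<bar>s\<bar> * \<bar>cq\<bar> + \<bar>s\<bar> * \<bar>bq\<bar>"
  proof -
    have "\<bar>cq\<bar> * 1 \<le> \<bar>cq\<bar> * \<bar>s\<bar>" using s1 by (intro mult_left_mono) auto
    thus ?thesis by (simp add: mult.commute)
  qed
  finally have "(a * \<bar>s\<bar>) * \<bar>s\<bar> \<le> (\<bar>bq\<bar> + \<bar>cq\<bar>) * \<bar>s\<bar>" by (simp add: algebra_simps)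
  hence "a * \<bar>s\<bar> \<le> \<bar>bq\<bar> + \<bar>cq\<bar>" using s1 by (meson mult_le_cancel_right_pos less_trans zero_less_one)
  hence "\<bar>s\<bar> \<le> (\<bar>bq\<bar> + \<bar>cq\<bar>) / a" using a by (simp add: le_divide_eq mult.commute)
  thus ?thesis by simp
qed

lemma subspace_Vker: "subspace (Vker A0 A F)"
  unfolding Vker_def subspace_def
  by (simp add: matrix_vector_right_distrib matrix_vector_mult_scaleR)

lemma affr_cong: "affr f \<Longrightarrow> (\<And>\<gamma>. g \<gamma> = f \<gamma>) \<Longrightarrow> affr g"
  unfolding affr_def by simp

theorem mainTheorem6:
  fixes A0 :: "real^'n^'n" and b0 :: "real^'n" and c0 :: real
    and A :: "'m::finite \<Rightarrow> real^'n^'n" and b :: "'m \<Rightarrow> real^'n" and c :: "'m \<Rightarrow> real"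
    and MI :: "'m set" and xh :: "real^'n" and th :: real
  assumes symA0: "symm A0" and symA: "\<forall>i. symm (A i)"
    and A_feas: "\<exists>x. (\<forall>i\<in>MI. qf (A i) (b i) (c i) x \<le> 0) \<and> (\<forall>i\<in>- MI. qf (A i) (b i) (c i) x = 0)"
    and A_slater: "\<exists>\<gamma>. (\<forall>i\<in>MI. 0 \<le> \<gamma>$i) \<and> pd (Agam A0 A \<gamma>)"
    and C_poly: "polyhedron (Gamma A0 A MI)"
    and dimcond: "\<forall>F. semidef_face A0 A MI F \<longrightarrow>
        int (dim (Vker A0 A F)) \<ge> aff_dim (bgam b0 b ` F) + 1"
    and hat_in: "(xh, th) \<in> D_SDP A0 b0 c0 A b c MI"
    and hat_semidef: "semidef_face A0 A MI (Fx A0 b0 c0 A b c MI xh)"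
  shows "(xh, th) \<in> convex hull {(x, t) \<in> D_SDP A0 b0 c0 A b c MI.
            aff_dim (Fx A0 b0 c0 A b c MI x) > aff_dim (Fx A0 b0 c0 A b c MI xh)}"
proof -
  define G where "G = Gamma A0 A MI"
  define q where "q = qgam A0 b0 c0 A b c"
  define FX where "FX = Fx A0 b0 c0 A b c MI"
  define F where "F = FX xh"
  have Ff: "F face_of G" "F \<noteq> {}" using hat_semidef by (simp_all add: semidef_face_def F_def FX_def G_def)
  have FxD: "\<gamma> \<in> FX y \<longleftrightarrow> \<gamma> \<in> G \<and> (\<forall>\<gamma>'\<in>G. q \<gamma>' y \<le> q \<gamma> y)" for \<gamma> y
    by (simp add: FX_def Fx_def q_def G_def)
  have FG: "F \<subseteq> G" using FxD F_def by blast
  have dimF: "aff_dim (bgam b0 b ` F) + 1 \<le> int (dim (Vker A0 A F))"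
    using dimcond hat_semidef by (simp add: F_def FX_def)
  obtain g00 where g00: "g00 \<in> F" using Ff(2) by blast
  define M where "M = q g00 xh"
  have qle: "q \<gamma> xh \<le> M" if "\<gamma> \<in> G" for \<gamma> using g00 that FxD F_def M_def by blast
  have qF: "q \<gamma> xh = M" if "\<gamma> \<in> F" for \<gamma>
  proof -
    have "q g00 xh \<le> q \<gamma> xh" using that g00 FxD F_def by blast
    thus ?thesis using qle[of \<gamma>] that FG M_def by auto
  qed
  obtain v where v: "v \<in> Vker A0 A F" "v \<noteq> 0" "\<forall>y\<in>bgam b0 b ` F. y \<bullet> v = bgam b0 b g00 \<bullet> v"
    using exists_v[OF subspace_Vker _ dimF] g00 by blast
  define \<beta> where "\<beta> = bgam b0 b g00 \<bullet> v"
  have Av0: "Agam A0 A \<gamma> *v v = 0" if "\<gamma> \<in> F" for \<gamma> using v(1) that by (simp add: Vker_def)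
  have bv: "bgam b0 b \<gamma> \<bullet> v = \<beta>" if "\<gamma> \<in> F" for \<gamma> using v(3) that by (simp add: \<beta>_def)
  define Lk where "Lk = (\<lambda>k. xh \<bullet> (A k *v v) + v \<bullet> (A k *v xh) + 2 * (b k \<bullet> v))"
  define L0 where "L0 = xh \<bullet> (A0 *v v) + v \<bullet> (A0 *v xh) + 2 * (b0 \<bullet> v)"
  define Qk where "Qk = (\<lambda>k. v \<bullet> (A k *v v))"
  define Q0 where "Q0 = v \<bullet> (A0 *v v)"
  define Lf where "Lf = (\<lambda>\<gamma>::real^'m. L0 + (\<Sum>k\<in>UNIV. \<gamma>$k * Lk k))"
  define Qf where "Qf = (\<lambda>\<gamma>::real^'m. Q0 + (\<Sum>k\<in>UNIV. \<gamma>$k * Qk k))"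
  have qexp: "q \<gamma> (xh + s *\<^sub>R v) = q \<gamma> xh + s * Lf \<gamma> + s^2 * Qf \<gamma>" for \<gamma> s
  proof -
    have "q \<gamma> (xh + s *\<^sub>R v) = (qf A0 b0 c0 xh + s * L0 + s^2 * Q0)
        + (\<Sum>k\<in>UNIV. \<gamma>$k * (qf (A k) (b k) (c k) xh + s * Lk k + s^2 * Qk k))"
      by (simp add: q_def qgam_def qf_exp L0_def Q0_def Lk_def Qk_def)
    also have "\<dots> = q \<gamma> xh + s * Lf \<gamma> + s^2 * Qf \<gamma>"
      by (simp add: q_def qgam_def Lf_def Qf_def distrib_left sum.distrib sum_distrib_left algebra_simps)
    finally show ?thesis .
  qed
  have QfA: "Qf \<gamma> = v \<bullet> (Agam A0 A \<gamma> *v v)" for \<gamma>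
    by (simp add: Qf_def Q0_def Qk_def inner_Agam)
  have LfA: "Lf \<gamma> = xh \<bullet> (Agam A0 A \<gamma> *v v) + v \<bullet> (Agam A0 A \<gamma> *v xh) + 2 * (bgam b0 b \<gamma> \<bullet> v)" for \<gamma>
    by (simp add: Lf_def L0_def Lk_def inner_Agam inner_bgam distrib_left sum.distrib sum_distrib_left algebra_simps)
  have symG: "symm (Agam A0 A \<gamma>)" for \<gamma> by (rule symm_Agam[OF symA0 symA])
  have QF: "Qf \<gamma> = 0" if "\<gamma> \<in> F" for \<gamma> using Av0[OF that] by (simp add: QfA)
  have LF: "Lf \<gamma> = 2 * \<beta>" if "\<gamma> \<in> F" for \<gamma>
  proof -
    have "v \<bullet> (Agam A0 A \<gamma> *v xh) = (Agam A0 A \<gamma> *v v) \<bullet> xh" using symm_inner[OF symG, of \<gamma> v xh] by simp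
    thus ?thesis using Av0[OF that] bv[OF that] by (simp add: LfA)
  qed
  define Gs where "Gs = (\<lambda>\<gamma> s. (q \<gamma> xh - M) + s * (Lf \<gamma> - 2 * \<beta>) + s^2 * Qf \<gamma>)"
  have qGs: "q \<gamma> (xh + s *\<^sub>R v) = M + 2 * s * \<beta> + Gs \<gamma> s" for \<gamma> s
    by (simp add: qexp Gs_def algebra_simps)
  have GsF: "Gs \<gamma> s = 0" if "\<gamma> \<in> F" for \<gamma> s using that by (simp add: Gs_def qF QF LF)
  define S where "S = {s. \<forall>\<gamma>\<in>G. Gs \<gamma> s \<le> 0}"
  have S0: "0 \<in> S" using qle by (simp add: S_def Gs_def)
  obtain \<gamma>s where \<gamma>s: "\<forall>i\<in>MI. 0 \<le> \<gamma>s$i" "pd (Agam A0 A \<gamma>s)" using A_slater by blast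
  have \<gamma>sG: "\<gamma>s \<in> G" using \<gamma>s pd_psd by (simp add: Gamma_def G_def)
  have apos: "Qf \<gamma>s > 0" using \<gamma>s(2) v(2) unfolding QfA pd_def by blast
  define Bd where "Bd = (\<bar>Lf \<gamma>s - 2 * \<beta>\<bar> + \<bar>q \<gamma>s xh - M\<bar>) / Qf \<gamma>s + 1"
  have Sbd: "\<bar>s\<bar> \<le> Bd" if "s \<in> S" for s
  proof -
    have "Gs \<gamma>s s \<le> 0" using that \<gamma>sG by (simp add: S_def)
    hence "(q \<gamma>s xh - M) + s * (Lf \<gamma>s - 2 * \<beta>) + s^2 * Qf \<gamma>s \<le> 0" by (simp add: Gs_def)
    from quad_bound[OF apos this] show ?thesis by (simp add: Bd_def)
  qed
  have bddS: "bdd_above S" "bdd_below S"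
  proof -
    show "bdd_above S"
    proof (rule bdd_aboveI[of S Bd])
      fix x assume "x \<in> S" hence "\<bar>x\<bar> \<le> Bd" by (rule Sbd)
      thus "x \<le> Bd" by linarith
    qed
    show "bdd_below S"
    proof (rule bdd_belowI[of S "- Bd"])
      fix x assume "x \<in> S" hence "\<bar>x\<bar> \<le> Bd" by (rule Sbd)
      thus "- Bd \<le> x" by linarith
    qed
  qed
  have closedS: "closed S"
  proof -
    have "S = (\<Inter>\<gamma>\<in>G. {s. Gs \<gamma> s \<le> 0})" by (auto simp: S_def)
    moreover have "closed {s. Gs \<gamma> s \<le> 0}" for \<gamma>
      unfolding Gs_def by (intro closed_Collect_le continuous_intros)
    ultimately show ?thesis by (simp add: closed_INT)
  qed
  have Sne: "S \<noteq> {}" using S0 by blast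
  define sp where "sp = Sup S"
  define sm where "sm = Inf S"
  have spS: "sp \<in> S" unfolding sp_def by (rule closed_contains_Sup[OF Sne bddS(1) closedS])
  have smS: "sm \<in> S" unfolding sm_def by (rule closed_contains_Inf[OF Sne bddS(2) closedS])
  have g00G: "g00 \<in> G" using g00 FG by blast
  have FXchar: "FX (xh + s *\<^sub>R v) = {\<gamma> \<in> G. 0 \<le> Gs \<gamma> s}" if sS: "s \<in> S" for s
  proof
    show "FX (xh + s *\<^sub>R v) \<subseteq> {\<gamma> \<in> G. 0 \<le> Gs \<gamma> s}"
    proof
      fix \<gamma> assume "\<gamma> \<in> FX (xh + s *\<^sub>R v)"
      hence "\<gamma> \<in> G" "q g00 (xh + s *\<^sub>R v) \<le> q \<gamma> (xh + s *\<^sub>R v)" using FxD g00G by blast+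
      thus "\<gamma> \<in> {\<gamma> \<in> G. 0 \<le> Gs \<gamma> s}" using GsF[OF g00, of s] by (simp add: qGs)
    qed
    show "{\<gamma> \<in> G. 0 \<le> Gs \<gamma> s} \<subseteq> FX (xh + s *\<^sub>R v)"
    proof
      fix \<gamma> assume "\<gamma> \<in> {\<gamma> \<in> G. 0 \<le> Gs \<gamma> s}"
      hence g: "\<gamma> \<in> G" "0 \<le> Gs \<gamma> s" by auto
      have "\<forall>\<gamma>'\<in>G. q \<gamma>' (xh + s *\<^sub>R v) \<le> q \<gamma> (xh + s *\<^sub>R v)"
        using sS g by (auto simp: qGs S_def)
      thus "\<gamma> \<in> FX (xh + s *\<^sub>R v)" using FxD g(1) by blast
    qed
  qed
  have FsubFX: "F \<subseteq> FX (xh + s *\<^sub>R v)" if "s \<in> S" for s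
    using FXchar[OF that] GsF FG by auto
  have affq: "affr (\<lambda>\<gamma>. q \<gamma> xh)" unfolding q_def qgam_def by (rule affr_sum)
  have affL: "affr Lf" unfolding Lf_def by (rule affr_sum)
  have affQ: "affr Qf" unfolding Qf_def by (rule affr_sum)
  have affG: "affr (\<lambda>\<gamma>. Gs \<gamma> s)" for s
    by (rule affr_cong[OF affr_lin[OF affr_lin[OF affq affL, of 1 s "- M - 2 * s * \<beta>"] affQ, of 1 "s^2" 0]])
       (simp add: Gs_def algebra_simps)
  have convFX: "convex (FX (xh + s *\<^sub>R v))" if "s \<in> S" for s
  proof -
    obtain w d where wd: "\<forall>\<gamma>. Gs \<gamma> s = w \<bullet> \<gamma> + d" using affG[of s, unfolded affr_def] by (elim exE)
    have "FX (xh + s *\<^sub>R v) = G \<inter> {\<gamma>. - d \<le> w \<bullet> \<gamma>}" using FXchar[OF that] wd by auto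
    moreover have "convex (G \<inter> {\<gamma>. - d \<le> w \<bullet> \<gamma>})"
      using polyhedron_imp_convex[OF C_poly] convex_halfspace_ge[of "- d" w] unfolding G_def by (rule convex_Int)
    ultimately show ?thesis by simp
  qed
  have loc: "\<exists>\<epsilon>>0. \<forall>e. \<bar>e\<bar> \<le> \<epsilon> \<longrightarrow> s0 + e \<in> S" if s0S: "s0 \<in> S" and FXs0: "FX (xh + s0 *\<^sub>R v) = F" for s0
  proof -
    define h1 where "h1 = (\<lambda>\<gamma>. Lf \<gamma> - 2 * \<beta> + 2 * s0 * Qf \<gamma>)"
    have Gexp: "Gs \<gamma> (s0 + e) = Gs \<gamma> s0 + e * h1 \<gamma> + e^2 * Qf \<gamma>" for \<gamma> e
      by (simp add: Gs_def h1_def power2_eq_square algebra_simps)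
    have gle: "\<forall>\<gamma>\<in>G. Gs \<gamma> s0 \<le> 0" using s0S by (simp add: S_def)
    have zs: "\<gamma> \<in> F" if "\<gamma> \<in> G" "Gs \<gamma> s0 = 0" for \<gamma>
      using FXchar[OF s0S] FXs0 that by auto
    have h1F: "h1 \<gamma> = 0" if "\<gamma> \<in> F" for \<gamma> using that by (simp add: h1_def LF QF)
    have affh1: "affr h1"
      by (rule affr_cong[OF affr_lin[OF affL affQ, of 1 "2 * s0" "- 2 * \<beta>"]]) (simp add: h1_def algebra_simps)
    have affh3: "affr (\<lambda>\<gamma>. - h1 \<gamma>)"
      by (rule affr_cong[OF affr_lin[OF affh1 affh1, of "-1" 0 0]]) simp
    have g0: "Gs g00 s0 = 0" by (rule GsF[OF g00])
    obtain C1 where C1: "C1 \<ge> 0" "\<forall>\<gamma>\<in>G. h1 \<gamma> \<le> C1 * (- Gs \<gamma> s0)"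
      using factP'[OF C_poly[folded G_def] affG affh1 gle g00G g0] zs h1F by blast
    obtain C3 where C3: "C3 \<ge> 0" "\<forall>\<gamma>\<in>G. - h1 \<gamma> \<le> C3 * (- Gs \<gamma> s0)"
      using factP'[OF C_poly[folded G_def] affG affh3 gle g00G g0] zs h1F by force
    obtain C2 where C2: "C2 \<ge> 0" "\<forall>\<gamma>\<in>G. Qf \<gamma> \<le> C2 * (- Gs \<gamma> s0)"
      using factP'[OF C_poly[folded G_def] affG affQ gle g00G g0] zs QF by blast
    define C where "C = C1 + C2 + C3"
    have Cnn: "C \<ge> 0" using C1 C2 C3 by (simp add: C_def)
    define \<epsilon> where "\<epsilon> = 1 / (2 * C + 2)"
    have epos: "\<epsilon> > 0" using Cnn by (simp add: \<epsilon>_def)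
    have eC: "2 * \<epsilon> * C < 1" using Cnn by (simp add: \<epsilon>_def field_simps)
    have e1: "\<epsilon> \<le> 1" using Cnn by (simp add: \<epsilon>_def field_simps)
    have "s0 + e \<in> S" if e: "\<bar>e\<bar> \<le> \<epsilon>" for e
      unfolding S_def
    proof (intro CollectI ballI)
      fix \<gamma> assume gG: "\<gamma> \<in> G"
      define g where "g = Gs \<gamma> s0"
      have gn: "g \<le> 0" using gle gG by (simp add: g_def)
      have ng: "0 \<le> - g" using gn by simp
      have t1: "e * h1 \<gamma> \<le> \<bar>e\<bar> * (C * (- g))"
      proof (cases "e \<ge> 0")
        case True
        have "e * h1 \<gamma> \<le> e * (C1 * (- g))" using C1(2) gG True by (intro mult_left_mono) (auto simp: g_def)
        also have "\<dots> \<le> e * (C * (- g))" using True ng C2(1) C3(1)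
          by (intro mult_left_mono mult_right_mono) (auto simp: C_def)
        finally show ?thesis using True by simp
      next
        case False
        have "e * h1 \<gamma> = (- e) * (- h1 \<gamma>)" by simp
        also have "\<dots> \<le> (- e) * (C3 * (- g))" using C3(2) gG False by (intro mult_left_mono) (auto simp: g_def)
        also have "\<dots> \<le> (- e) * (C * (- g))" using False ng C1(1) C2(1)
          by (intro mult_left_mono mult_right_mono) (auto simp: C_def)
        finally show ?thesis using False by simp
      qed
      have ee: "e^2 \<le> \<bar>e\<bar>"
      proof -
        have "\<bar>e\<bar> * \<bar>e\<bar> \<le> \<bar>e\<bar> * 1" using e e1 by (intro mult_left_mono) auto
        thus ?thesis by (simp add: power2_eq_square abs_mult_self_eq)
      qed
      have t2: "e^2 * Qf \<gamma> \<le> \<bar>e\<bar> * (C * (- g))"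
      proof -
        have "e^2 * Qf \<gamma> \<le> e^2 * (C2 * (- g))" using C2(2) gG by (intro mult_left_mono) (auto simp: g_def)
        also have "\<dots> \<le> e^2 * (C * (- g))" using ng C1(1) C3(1)
          by (intro mult_left_mono mult_right_mono) (auto simp: C_def)
        also have "\<dots> \<le> \<bar>e\<bar> * (C * (- g))"
          using ee mult_nonneg_nonneg[OF Cnn ng] by (rule mult_right_mono)
        finally show ?thesis .
      qed
      have "2 * \<bar>e\<bar> * C \<le> 2 * \<epsilon> * C" using e Cnn by (intro mult_right_mono) auto
      hence fac: "0 \<le> 1 - 2 * \<bar>e\<bar> * C" using eC by linarith
      have "Gs \<gamma> (s0 + e) \<le> g + \<bar>e\<bar> * (C * (- g)) + \<bar>e\<bar> * (C * (- g))"
        using t1 t2 unfolding Gexp g_def by linarith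
      also have "\<dots> = g * (1 - 2 * \<bar>e\<bar> * C)" by (simp add: algebra_simps)
      also have "\<dots> \<le> 0" using gn fac by (simp add: mult_nonpos_nonneg)
      finally show "Gs \<gamma> (s0 + e) \<le> 0" .
    qed
    thus ?thesis using epos by blast
  qed
  have FX0: "FX (xh + 0 *\<^sub>R v) = F" by (simp add: F_def)
  obtain e0 where e0: "e0 > 0" "\<forall>e. \<bar>e\<bar> \<le> e0 \<longrightarrow> 0 + e \<in> S" using loc[OF S0 FX0] by blast
  have "e0 \<in> S" "- e0 \<in> S" using e0 by auto
  hence spp: "sp > 0" and smn: "sm < 0"
    using cSup_upper[OF _ bddS(1), of e0] cInf_lower[OF _ bddS(2), of "- e0"] e0(1)
    by (auto simp: sp_def sm_def)
  have FXsp: "FX (xh + sp *\<^sub>R v) \<noteq> F"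
  proof
    assume "FX (xh + sp *\<^sub>R v) = F"
    then obtain \<epsilon> where "\<epsilon> > 0" "\<forall>e. \<bar>e\<bar> \<le> \<epsilon> \<longrightarrow> sp + e \<in> S" using loc[OF spS] by blast
    hence "sp + \<epsilon> \<in> S" by auto
    hence "sp + \<epsilon> \<le> sp" unfolding sp_def by (rule cSup_upper[OF _ bddS(1)])
    thus False using \<open>\<epsilon> > 0\<close> by simp
  qed
  have FXsm: "FX (xh + sm *\<^sub>R v) \<noteq> F"
  proof
    assume "FX (xh + sm *\<^sub>R v) = F"
    then obtain \<epsilon> where "\<epsilon> > 0" "\<forall>e. \<bar>e\<bar> \<le> \<epsilon> \<longrightarrow> sm + e \<in> S" using loc[OF smS] by blast
    hence "sm + (- \<epsilon>) \<in> S" using \<open>\<epsilon> > 0\<close> by (metis abs_minus_cancel abs_of_pos order.refl)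
    hence "sm \<le> sm - \<epsilon>" unfolding sm_def using cInf_lower[OF _ bddS(2)] by fastforce
    thus False using \<open>\<epsilon> > 0\<close> by simp
  qed
  have Mle: "M \<le> 2 * th" unfolding M_def q_def
    using weak_duality[OF symA0 symA hat_in, of g00] g00G by (simp add: G_def)
  define Pset where "Pset = {(x, t) \<in> D_SDP A0 b0 c0 A b c MI.
            aff_dim (Fx A0 b0 c0 A b c MI x) > aff_dim (Fx A0 b0 c0 A b c MI xh)}"
  have inP: "(xh + s *\<^sub>R v, th + s * \<beta>) \<in> Pset" if sS: "s \<in> S" and neq: "FX (xh + s *\<^sub>R v) \<noteq> F" for s
  proof -
    have "\<forall>\<gamma>\<in>Gamma A0 A MI. qgam A0 b0 c0 A b c \<gamma> (xh + s *\<^sub>R v) \<le> 2 * (th + s * \<beta>)"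
    proof
      fix \<gamma> assume "\<gamma> \<in> Gamma A0 A MI"
      hence "Gs \<gamma> s \<le> 0" using sS by (simp add: S_def G_def)
      thus "qgam A0 b0 c0 A b c \<gamma> (xh + s *\<^sub>R v) \<le> 2 * (th + s * \<beta>)"
        using qGs[of \<gamma> s] Mle unfolding q_def by simp
    qed
    hence D: "(xh + s *\<^sub>R v, th + s * \<beta>) \<in> D_SDP A0 b0 c0 A b c MI"
      by (rule strong_duality[OF \<gamma>sG[unfolded G_def] \<gamma>s(2)])
    have FXsubG: "FX (xh + s *\<^sub>R v) \<subseteq> G" using FxD by blast
    have "F face_of FX (xh + s *\<^sub>R v)" by (rule face_of_subset[OF Ff(1) FsubFX[OF sS] FXsubG])
    hence "aff_dim F < aff_dim (FX (xh + s *\<^sub>R v))"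
      using face_of_aff_dim_lt[OF convFX[OF sS]] neq by blast
    thus ?thesis using D unfolding Pset_def by (simp add: F_def FX_def)
  qed
  have Pp: "(xh + sp *\<^sub>R v, th + sp * \<beta>) \<in> Pset" by (rule inP[OF spS FXsp])
  have Pm: "(xh + sm *\<^sub>R v, th + sm * \<beta>) \<in> Pset" by (rule inP[OF smS FXsm])
  define u where "u = - sm / (sp - sm)"
  have u: "0 \<le> u" "u \<le> 1" using spp smn by (auto simp: u_def divide_simps)
  have k0: "(1 - u) * sm + u * sp = 0" using spp smn by (simp add: u_def field_simps)
  have "(1 - u) *\<^sub>R (xh + sm *\<^sub>R v, th + sm * \<beta>) + u *\<^sub>R (xh + sp *\<^sub>R v, th + sp * \<beta>) \<in> convex hull Pset"
    by (rule convexD_alt[OF convex_convex_hull hull_inc[OF Pm] hull_inc[OF Pp] u])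
  moreover have "(1 - u) *\<^sub>R (xh + sm *\<^sub>R v, th + sm * \<beta>) + u *\<^sub>R (xh + sp *\<^sub>R v, th + sp * \<beta>) = (xh, th)"
  proof -
    have "(1 - u) *\<^sub>R (xh + sm *\<^sub>R v) + u *\<^sub>R (xh + sp *\<^sub>R v) = xh + ((1 - u) * sm + u * sp) *\<^sub>R v"
      by (simp add: algebra_simps)
    moreover have "(1 - u) * (th + sm * \<beta>) + u * (th + sp * \<beta>) = th + ((1 - u) * sm + u * sp) * \<beta>"
      by (simp add: algebra_simps)
    ultimately show ?thesis using k0 by simp
  qed
  ultimately show ?thesis unfolding Pset_def by simp
qed


end
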